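(* Consider SONATA with step-size $\alpha\in(0,1]$ under Assumptions (A), (B), (C), (W). Let $\epsilon_{opt}>0$ with $a(\alpha):=(1-\frac\alpha2)\tilde\mu_{\min}+\frac{D^\ell_{\min}}2\alpha-\frac12\epsilon_{opt}>0$, and $\sigma(\alpha)=1-\alpha\frac{a(\alpha)}{D_{\max}^2/\mu+a(\alpha)}$, $\eta(\alpha)=\frac{\frac\alpha{2\epsilon_{opt}}\frac{D_{\max}^2}\mu+\frac\alpha\mu a(\alpha)}{D_{\max}^2/\mu+a(\alpha)}$. Let $\epsilon_x,\epsilon_y>0$. For $z\in(0,1)$, an integer $K\ge0$ and a real sequence $\{s^\nu\}$ write $S^K(z)=\max_{\nu=0,\dots,K}|s^\nu|z^{-\nu}$, and let $P^K(z),X_\perp^K(z),Y_\perp^K(z),D^K(z)$ be this transform of $\{p^\nu\},\{\|x_\perp^\nu\|^2\},\{\|y_\perp^\nu\|^2\},\{\|d^\nu\|^2\}$. Then for every $K\ge0$ and every $z\in\big(\max\{\sigma(\alpha),\rho^2(1+\epsilon_x),\rho^2(1+\epsilon_y)\},1\big)$: $P^K(z)\le G_P(\alpha,z)\big(4L_{\max}^2X_\perp^K(z)+2Y_\perp^K(z)\big)+\omega_p$; $X_\perp^K(z)\le G_X(z)\rho^2\alpha^2D^K(z)+\omega_x$; $Y_\perp^K(z)\le G_Y(z)8L_{\max}^2\rho^2X_\perp^K(z)+G_Y(z)2L_{\max}^2\rho^2\alpha^2D^K(z)+\omega_y$; $D^K(z)\le C_1P^K(z)+C_2Y_\perp^K(z)$,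 where $G_P(\alpha,z)=\frac{\eta(\alpha)}{z-\sigma(\alpha)}$, $\omega_p=\frac{z}{z-\sigma(\alpha)}p^0$, $G_X(z)=\frac{1+\epsilon_x^{-1}}{z-\rho^2(1+\epsilon_x)}$, $\omega_x=\frac{z}{z-\rho^2(1+\epsilon_x)}\|x_\perp^0\|^2$, $G_Y(z)=\frac{1+\epsilon_y^{-1}}{z-\rho^2(1+\epsilon_y)}$, $\omega_y=\frac{z}{z-\rho^2(1+\epsilon_y)}\|y_\perp^0\|^2$, $C_1=\frac6\mu\big((\frac{D_{\max}}{\tilde\mu_{\min}}+1)^2+\frac{4L_{\max}^2}{\tilde\mu_{\min}^2}\big)$, $C_2=\frac4{\tilde\mu_{\min}^2}$.
   Context: Problem (P): minimize $U=F+G$ over $\mathcal K$, $F=\frac1m\sum_{i=1}^mf_i$. (A): $\mathcal K\subseteq\mathbb R^d$ nonempty closed convex; $f_i$ twice differentiable convex on open $\mathcal O\supseteq\mathcal K$; $\mu I\preceq\nabla^2F\preceq LI$ on $\mathcal K$ ($\mu>0$, $L<\infty$); $G$ convex on $\mathcal K$; $x^\star$ unique minimizer, $U^\star=U(x^\star)$. $\nabla^2f_i\preceq L_iI$ on $\mathcal K$, $L_{\max}=\max L_i$. (B): connected undirected graph on $\{1,\dots,m\}$, edges $\mathcal E$. (W): $w_{ii}>0$; for $i\ne j$, $w_{ij}>0$ iff $(i,j)\in\mathcal E$, else 0; $W$ doubly stochastic; $\rho$ = largest singular value of $W\otimes I_d-\frac1m\mathbf1\mathbf1^\top\otimes I_d$.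 (C): $\tilde f_i:\mathcal O\times\mathcal O\to\mathbb R$ $C^2$, $\nabla\tilde f_i(x;x)=\nabla f_i(x)$, $\nabla\tilde f_i(\cdot;x)$ $\tilde L_i$-Lipschitz, $\tilde f_i(\cdot;x)$ $\tilde\mu_i$-strongly convex on $\mathcal K$ for all $x\in\mathcal K$; constants $D_i^\ell\le D_i^u$ with $D_i^\ell I\preceq\nabla^2\tilde f_i(x;y)-\nabla^2F(x)\preceq D_i^uI$ on $\mathcal K\times\mathcal K$; $D_i=\max\{|D_i^\ell|,|D_i^u|\}$, $\tilde\mu_{\min}=\min\tilde\mu_i$, $D^\ell_{\min}=\min D^\ell_i$, $D_{\max}=\max D_i$. SONATA: $x_i^0\in\mathcal K$, $y_i^0=\nabla f_i(x_i^0)$; $\hat x_i^\nu=\arg\min_{x_i\in\mathcal K}\tilde f_i(x_i;x_i^\nu)+(y_i^\nu-\nabla f_i(x_i^\nu))^\top(x_i-x_i^\nu)+G(x_i)$; $d_i^\nu=\hat x_i^\nu-x_i^\nu$; $x_i^{\nu+1/2}=x_i^\nu+\alpha d_i^\nu$; $x_i^{\nu+1}=\sum_jw_{ij}x_j^{\nu+1/2}$; $y_i^{\nu+1}=\sum_jw_{ij}(y_j^\nu+\nabla f_j(x_j^{\nu+1})-\nabla f_j(x_j^\nu))$. $x^\nu,y^\nu,d^\nu$ stack local vectors; $x_\perp^\nu=x^\nu-\mathbf1_m\otimes\frac1m\sum_ix_i^\nu$, $y_\perp^\nu=y^\nu-\mathbf1_m\otimes\frac1m\sum_iy_i^\nu$;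 $p^\nu=\sum_i(U(x_i^\nu)-U^\star)$. *)

theory Defs
  imports "HOL-Analysis.Analysis"
begin

definition strongly_convex_on :: "'a::real_inner set \<Rightarrow> ('a \<Rightarrow> real) \<Rightarrow> real \<Rightarrow> bool" where
  "strongly_convex_on S f c \<longleftrightarrow> convex_on S (\<lambda>x. f x - (c / 2) * (norm x)\<^sup>2)"

definition C2_on :: "'a::euclidean_space set \<Rightarrow> ('a \<Rightarrow> real) \<Rightarrow> bool" where
  "C2_on S f \<longleftrightarrow> (\<exists>Df D2. (\<forall>p\<in>S. (f has_derivative blinfun_apply (Df p)) (at p)
       \<and> (Df has_derivative blinfun_apply (D2 p)) (at p)) \<and> continuous_on S D2)"

text \<open>Largest singular value of (W - (1/m) 1 1^T) (x) I_d, i.e. its spectral (operator 2-) norm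
  acting on stacked vectors in (R^d)^m with the Euclidean norm.\<close>
definition sonata_rho :: "('i::finite \<Rightarrow> 'i \<Rightarrow> real) \<Rightarrow> 'd::finite itself \<Rightarrow> real" where
  "sonata_rho W _ = onorm (\<lambda>x :: (real^'d)^'i.
      \<chi> i. \<Sum>j\<in>UNIV. (W i j - 1 / real CARD('i)) *\<^sub>R (x $ j))"

definition maxtr :: "(nat \<Rightarrow> real) \<Rightarrow> nat \<Rightarrow> real \<Rightarrow> real" where
  "maxtr s K z = Max ((\<lambda>\<nu>. \<bar>s \<nu>\<bar> * z powi (- int \<nu>)) ` {..K})"

definition perp_sq :: "('i::finite \<Rightarrow> 'a::real_inner) \<Rightarrow> real" where
  "perp_sq v = (\<Sum>i\<in>UNIV. (norm (v i - (1 / real CARD('i)) *\<^sub>R (\<Sum>j\<in>UNIV. v j)))\<^sup>2)"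

definition stack_sq :: "('i::finite \<Rightarrow> 'a::real_inner) \<Rightarrow> real" where
  "stack_sq v = (\<Sum>i\<in>UNIV. (norm (v i))\<^sup>2)"

end

theory Submission
  imports Defs
begin

lemma dir_deriv:
  fixes g :: "'a::real_normed_vector \<Rightarrow> real"
  assumes "(g has_derivative g') (at w)"
  shows "((\<lambda>t. g (w + t *\<^sub>R v)) has_real_derivative g' v) (at 0)"
proof -
  have "((\<lambda>t. w + t *\<^sub>R v) has_derivative (\<lambda>t. t *\<^sub>R v)) (at 0)"
    by (auto intro!: derivative_eq_intros)
  from has_derivative_compose[OF this, of g g'] assms
  have "((\<lambda>t. g (w + t *\<^sub>R v)) has_derivative (\<lambda>t. g' (t *\<^sub>R v))) (at 0)" by simp
  moreover have "(\<lambda>t. g' (t *\<^sub>R v)) = (\<lambda>t. t * g' v)"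
    using has_derivative_bounded_linear[OF assms] by (simp add: linear_simps(5) bounded_linear.linear linear_scale)
  ultimately show ?thesis by (simp add: has_field_derivative_def mult.commute[of _ "g' v"])
qed

lemma deriv_dir_lower:
  fixes g :: "'a::real_normed_vector \<Rightarrow> real"
  assumes "(g has_derivative g') (at w)"
    and "\<forall>\<^sub>F t in at_right 0. g (w + t *\<^sub>R v) - g w \<ge> t * c"
  shows "g' v \<ge> c"
proof -
  have D: "((\<lambda>t. g (w + t *\<^sub>R v)) has_real_derivative g' v) (at 0)"
    using dir_deriv[OF assms(1)] by simp
  hence "((\<lambda>t. (g (w + t *\<^sub>R v) - g w) / t) \<longlongrightarrow> g' v) (at 0)"
    unfolding has_field_derivative_iff by simp
  hence T: "((\<lambda>t. (g (w + t *\<^sub>R v) - g w) / t) \<longlongrightarrow> g' v) (at_right 0)"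
    by (simp add: filterlim_at_split)
  have "\<forall>\<^sub>F t in at_right 0. c \<le> (g (w + t *\<^sub>R v) - g w) / t"
    using assms(2) eventually_at_right_less[of 0]
  proof eventually_elim
    case (elim t) thus ?case by (simp add: pos_le_divide_eq mult.commute)
  qed
  from tendsto_lowerbound[OF T this] show ?thesis by simp
qed

lemma deriv_dir_upper:
  fixes g :: "'a::real_normed_vector \<Rightarrow> real"
  assumes "(g has_derivative g') (at w)"
    and "\<forall>\<^sub>F t in at_right 0. g (w + t *\<^sub>R v) - g w \<le> t * c"
  shows "g' v \<le> c"
proof -
  have "((\<lambda>x. - g x) has_derivative (\<lambda>x. - g' x)) (at w)"
    using assms(1) by (intro derivative_eq_intros) auto
  have "\<forall>\<^sub>F t in at_right 0. - (t * c) \<le> g w - g (w + t *\<^sub>R v)"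
    using assms(2) by (auto elim!: eventually_mono)
  thus ?thesis using deriv_dir_lower[OF \<open>((\<lambda>x. - g x) has_derivative (\<lambda>x. - g' x)) (at w)\<close>, where v=v and c="-c"] by simp
qed


lemma hess_sym_aux:
  fixes f :: "'a::real_inner \<Rightarrow> real" and g :: "'a \<Rightarrow> 'a"
  assumes fg: "\<And>u. u \<in> S \<Longrightarrow> (f has_derivative (\<lambda>h. g u \<bullet> h)) (at u)"
    and lin: "linear H"
    and gd: "\<And>y. norm (y - x) < \<delta> \<Longrightarrow> norm (g y - g x - H (y - x)) \<le> e * norm (y - x)"
    and inS: "\<And>t. 0 \<le> t \<Longrightarrow> t \<le> s \<Longrightarrow> x + t *\<^sub>R a \<in> S \<and> x + t *\<^sub>R a + s *\<^sub>R b \<in> S"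
    and sd: "s * (norm a + norm b) < \<delta>" and s: "s > 0" and e: "e \<ge> 0"
  shows "\<bar>(f (x + s *\<^sub>R a + s *\<^sub>R b) - f (x + s *\<^sub>R a) - f (x + s *\<^sub>R b) + f x) - s\<^sup>2 * (H b \<bullet> a)\<bar>
          \<le> 2 * e * s\<^sup>2 * norm a * (norm a + norm b)"
proof -
  define \<phi> where "\<phi> t = f (x + t *\<^sub>R a + s *\<^sub>R b) - f (x + t *\<^sub>R a)" for t
  define \<phi>' where "\<phi>' t = g (x + t *\<^sub>R a + s *\<^sub>R b) \<bullet> a - g (x + t *\<^sub>R a) \<bullet> a" for t
  have der: "(\<phi> has_real_derivative \<phi>' t) (at t)" if "0 \<le> t" "t \<le> s" for t
  proof -
    have d1: "((\<lambda>t. x + t *\<^sub>R a + s *\<^sub>R b) has_derivative (\<lambda>t. t *\<^sub>R a)) (at t)"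
      by (auto intro!: derivative_eq_intros)
    have d2: "((\<lambda>t. x + t *\<^sub>R a) has_derivative (\<lambda>t. t *\<^sub>R a)) (at t)"
      by (auto intro!: derivative_eq_intros)
    have e1: "((\<lambda>t. f (x + t *\<^sub>R a + s *\<^sub>R b)) has_derivative (\<lambda>h. g (x + t *\<^sub>R a + s *\<^sub>R b) \<bullet> (h *\<^sub>R a))) (at t)"
      using has_derivative_compose[OF d1 fg[of "x + t *\<^sub>R a + s *\<^sub>R b"]] inS[OF that] by simp
    have e2: "((\<lambda>t. f (x + t *\<^sub>R a)) has_derivative (\<lambda>h. g (x + t *\<^sub>R a) \<bullet> (h *\<^sub>R a))) (at t)"
      using has_derivative_compose[OF d2 fg[of "x + t *\<^sub>R a"]] inS[OF that] by simp
    have "(\<phi> has_derivative (\<lambda>h. g (x + t *\<^sub>R a + s *\<^sub>R b) \<bullet> (h *\<^sub>R a) - g (x + t *\<^sub>R a) \<bullet> (h *\<^sub>R a))) (at t)"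
      unfolding \<phi>_def by (rule has_derivative_diff[OF e1 e2])
    moreover have "(\<lambda>h. g (x + t *\<^sub>R a + s *\<^sub>R b) \<bullet> (h *\<^sub>R a) - g (x + t *\<^sub>R a) \<bullet> (h *\<^sub>R a)) = (\<lambda>h. \<phi>' t * h)"
      by (auto simp: \<phi>'_def algebra_simps)
    ultimately show ?thesis by (simp add: has_field_derivative_def)
  qed
  obtain \<xi> where \<xi>: "0 < \<xi>" "\<xi> < s" "\<phi> s - \<phi> 0 = (s - 0) * \<phi>' \<xi>"
    using MVT2[OF s, of \<phi> \<phi>'] der by auto
  define r1 where "r1 = g (x + \<xi> *\<^sub>R a + s *\<^sub>R b) - g x - H (\<xi> *\<^sub>R a + s *\<^sub>R b)"
  define r2 where "r2 = g (x + \<xi> *\<^sub>R a) - g x - H (\<xi> *\<^sub>R a)"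
  have n1: "norm (\<xi> *\<^sub>R a + s *\<^sub>R b) \<le> s * (norm a + norm b)"
  proof -
    have "norm (\<xi> *\<^sub>R a + s *\<^sub>R b) \<le> \<xi> * norm a + s * norm b"
      using norm_triangle_ineq[of "\<xi> *\<^sub>R a" "s *\<^sub>R b"] \<xi> s by simp
    also have "\<dots> \<le> s * norm a + s * norm b" using \<xi> by (simp add: mult_right_mono)
    finally show ?thesis by (simp add: algebra_simps)
  qed
  have n2: "norm (\<xi> *\<^sub>R a) \<le> s * (norm a + norm b)"
  proof -
    have "\<xi> * norm a \<le> s * norm a" using \<xi> by (intro mult_right_mono) auto
    moreover have "0 \<le> s * norm b" using s by simp
    ultimately have "\<xi> * norm a \<le> s * norm a + s * norm b" by linarith
    thus ?thesis using \<xi> by (simp add: distrib_left)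
  qed
  have R1: "norm r1 \<le> e * (s * (norm a + norm b))"
  proof -
    have "norm r1 \<le> e * norm (\<xi> *\<^sub>R a + s *\<^sub>R b)"
      unfolding r1_def using gd[of "x + \<xi> *\<^sub>R a + s *\<^sub>R b"] n1 sd by (simp add: add.assoc)
    also have "\<dots> \<le> e * (s * (norm a + norm b))" using n1 e by (rule mult_left_mono)
    finally show ?thesis .
  qed
  have R2: "norm r2 \<le> e * (s * (norm a + norm b))"
  proof -
    have "norm r2 \<le> e * norm (\<xi> *\<^sub>R a)"
      unfolding r2_def using gd[of "x + \<xi> *\<^sub>R a"] n2 sd by simp
    also have "\<dots> \<le> e * (s * (norm a + norm b))" using n2 e by (rule mult_left_mono)
    finally show ?thesis .
  qed
  have Hlin: "H (\<xi> *\<^sub>R a + s *\<^sub>R b) - H (\<xi> *\<^sub>R a) = s *\<^sub>R H b"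
    using lin by (simp add: linear_add linear_scale)
  have E: "\<phi>' \<xi> = (r1 - r2) \<bullet> a + s * (H b \<bullet> a)"
    unfolding \<phi>'_def r1_def r2_def
    using Hlin by (simp add: algebra_simps inner_diff_left)
  have "(f (x + s *\<^sub>R a + s *\<^sub>R b) - f (x + s *\<^sub>R a) - f (x + s *\<^sub>R b) + f x) - s\<^sup>2 * (H b \<bullet> a)
        = s * ((r1 - r2) \<bullet> a)"
    using \<xi>(3) unfolding E \<phi>_def by (simp add: power2_eq_square algebra_simps)
  moreover have "\<bar>(r1 - r2) \<bullet> a\<bar> \<le> 2 * e * s * norm a * (norm a + norm b)"
  proof -
    have "\<bar>(r1 - r2) \<bullet> a\<bar> \<le> norm (r1 - r2) * norm a" by (rule Cauchy_Schwarz_ineq2)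
    also have "\<dots> \<le> (norm r1 + norm r2) * norm a" by (simp add: mult_right_mono norm_triangle_ineq4)
    also have "\<dots> \<le> (2 * (e * (s * (norm a + norm b)))) * norm a"
      using R1 R2 by (intro mult_right_mono) auto
    finally show ?thesis by (simp add: algebra_simps)
  qed
  ultimately have "\<bar>(f (x + s *\<^sub>R a + s *\<^sub>R b) - f (x + s *\<^sub>R a) - f (x + s *\<^sub>R b) + f x) - s\<^sup>2 * (H b \<bullet> a)\<bar>
      \<le> s * (2 * e * s * norm a * (norm a + norm b))"
    using s by (simp add: abs_mult mult_left_mono)
  thus ?thesis by (simp add: power2_eq_square algebra_simps)
qed

lemma hess_sym:
  fixes f :: "'a::real_inner \<Rightarrow> real" and g :: "'a \<Rightarrow> 'a"
  assumes S: "open S" "x \<in> S"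
    and fg: "\<And>u. u \<in> S \<Longrightarrow> (f has_derivative (\<lambda>h. g u \<bullet> h)) (at u)"
    and gH: "(g has_derivative H) (at x)"
  shows "H h \<bullet> k = H k \<bullet> h"
proof -
  have lin: "linear H" using has_derivative_bounded_linear[OF gH] bounded_linear.linear by blast
  obtain r where r: "r > 0" "ball x r \<subseteq> S" using S open_contains_ball by blast
  define N where "N = norm h + norm k + 1"
  have N: "N > 0" "norm h + norm k < N" unfolding N_def by (auto intro: add_nonneg_pos add_nonneg_nonneg)
  have key: "\<bar>H k \<bullet> h - H h \<bullet> k\<bar> \<le> 2 * e * N\<^sup>2" if e: "e > 0" for e
  proof -
    obtain \<delta> where \<delta>: "\<delta> > 0" "\<And>y. norm (y - x) < \<delta> \<Longrightarrow> norm (g y - g x - H (y - x)) \<le> e * norm (y - x)"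
      using gH e unfolding has_derivative_at_alt by blast
    define s where "s = min \<delta> r / (2*N)"
    have s: "s > 0" "s * N < min \<delta> r"
      unfolding s_def using N \<delta> r by (auto simp: field_simps)
    have sN: "s * (norm h + norm k) < s * N" using s N by simp
    have sd: "s*(norm h + norm k) < \<delta>" "s*(norm k + norm h) < \<delta>" proof -
      have "min \<delta> r \<le> \<delta>" by simp
      hence "s*(norm h + norm k) < \<delta>" using s(2) sN by linarith
      thus "s*(norm h + norm k) < \<delta>" "s*(norm k + norm h) < \<delta>" by (auto simp: add.commute)
    qed
    have inS: "x + t *\<^sub>R a \<in> S \<and> x + t *\<^sub>R a + s *\<^sub>R b \<in> S"
      if ab: "norm a + norm b \<le> norm h + norm k" and t: "0 \<le> t" "t \<le> s" for a b t
    proof -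
      have "norm (t *\<^sub>R a) \<le> s * norm a" using t by (simp add: mult_right_mono)
      moreover have "norm (t *\<^sub>R a + s *\<^sub>R b) \<le> s * norm a + s * norm b"
      proof -
        have "t * norm a \<le> s * norm a" using t by (simp add: mult_right_mono)
        thus ?thesis using norm_triangle_ineq[of "t *\<^sub>R a" "s *\<^sub>R b"] t s by simp
      qed
      moreover have "s * (norm a + norm b) \<le> s * (norm h + norm k)" using ab s by simp
      moreover have "0 \<le> s * norm b" using s by simp
      moreover have "s*N < r" using s(2) by simp
      ultimately have "norm (t *\<^sub>R a) < r" "norm (t *\<^sub>R a + s *\<^sub>R b) < r"
        using sN unfolding distrib_left by linarith+
      hence "x + t *\<^sub>R a \<in> ball x r" "x + (t *\<^sub>R a + s *\<^sub>R b) \<in> ball x r"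
        using norm_minus_cancel[of "t *\<^sub>R a + s *\<^sub>R b"] by (auto simp: dist_norm)
      thus ?thesis using r by (auto simp: add.assoc)
    qed
    have inS2: "x + t *\<^sub>R k \<in> S \<and> x + t *\<^sub>R k + s *\<^sub>R h \<in> S" if "0 \<le> t" "t \<le> s" for t
      using inS[of k h t] that by (simp add: add.commute)
    have A1: "\<bar>(f (x + s *\<^sub>R h + s *\<^sub>R k) - f (x + s *\<^sub>R h) - f (x + s *\<^sub>R k) + f x) - s\<^sup>2 * (H k \<bullet> h)\<bar>
          \<le> 2 * e * s\<^sup>2 * norm h * (norm h + norm k)"
      by (rule hess_sym_aux[OF fg lin \<delta>(2)]) (use inS sd s e in auto)
    have A2: "\<bar>(f (x + s *\<^sub>R k + s *\<^sub>R h) - f (x + s *\<^sub>R k) - f (x + s *\<^sub>R h) + f x) - s\<^sup>2 * (H h \<bullet> k)\<bar>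
          \<le> 2 * e * s\<^sup>2 * norm k * (norm k + norm h)"
      by (rule hess_sym_aux[OF fg lin \<delta>(2)]) (use inS2 sd s e in auto)
    have sym: "x + s *\<^sub>R k + s *\<^sub>R h = x + s *\<^sub>R h + s *\<^sub>R k" by (simp add: add_ac)
    have "\<bar>s\<^sup>2 * (H k \<bullet> h - H h \<bullet> k)\<bar> \<le> 2 * e * s\<^sup>2 * norm h * (norm h + norm k) + 2 * e * s\<^sup>2 * norm k * (norm k + norm h)"
      using A1 A2 unfolding sym by (simp add: algebra_simps)
    also have "\<dots> = s\<^sup>2 * (2 * e * (norm h + norm k)\<^sup>2)" by (simp add: power2_eq_square algebra_simps)
    also have "\<dots> \<le> s\<^sup>2 * (2 * e * N\<^sup>2)"
      using N e by (intro mult_left_mono mult_left_mono power_mono) auto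
    finally have "s\<^sup>2 * \<bar>H k \<bullet> h - H h \<bullet> k\<bar> \<le> s\<^sup>2 * (2 * e * N\<^sup>2)" by (simp add: abs_mult)
    thus ?thesis using s by simp
  qed
  show ?thesis
  proof (rule ccontr)
    assume ne: "H h \<bullet> k \<noteq> H k \<bullet> h"
    define z where "z = \<bar>H k \<bullet> h - H h \<bullet> k\<bar>"
    have z: "z > 0" using ne unfolding z_def by auto
    have "z \<le> 2 * (z / (4 * N\<^sup>2)) * N\<^sup>2" using key[of "z / (4 * N\<^sup>2)"] z N unfolding z_def by simp
    also have "\<dots> = z / 2" using N by (simp add: field_simps)
    finally show False using z by simp
  qed
qed


lemma sym_bound:
  fixes B :: "'a::real_inner \<Rightarrow> 'a"
  assumes lin: "linear B" and sym: "\<And>u v. B u \<bullet> v = B v \<bullet> u"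
    and q: "\<And>u. \<bar>u \<bullet> B u\<bar> \<le> D * (norm u)\<^sup>2"
  shows "norm (B h) \<le> D * norm h"
proof (cases "B h = 0")
  case True
  show ?thesis
  proof (cases "h = 0")
    case True thus ?thesis using lin by (simp add: linear_0)
  next
    case False
    have "0 \<le> D * (norm h)\<^sup>2" using q[of h] by linarith
    hence "D \<ge> 0" using False by (simp add: zero_le_mult_iff)
    thus ?thesis using \<open>B h = 0\<close> by simp
  qed
next
  case False
  hence hne: "h \<noteq> 0" using lin by (auto simp: linear_0)
  define c where "c = norm h / norm (B h)"
  have c: "c > 0" using False hne unfolding c_def by simp
  define k where "k = c *\<^sub>R B h"
  have nk: "norm k = norm h" unfolding k_def c_def using False by simp
  have Bk: "B k = c *\<^sub>R B (B h)" unfolding k_def using lin by (simp add: linear_scale)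
  have hk: "h \<bullet> B k = k \<bullet> B h" using sym[of k h] by (simp add: inner_commute)
  have e1: "(h + k) \<bullet> B (h + k) = h \<bullet> B h + 2 * (k \<bullet> B h) + k \<bullet> B k"
    using lin hk by (simp add: linear_add inner_add_left inner_add_right)
  have e2: "(h - k) \<bullet> B (h - k) = h \<bullet> B h - 2 * (k \<bullet> B h) + k \<bullet> B k"
    using lin hk by (simp add: linear_diff inner_diff_left inner_diff_right)
  have par: "(norm (h + k))\<^sup>2 + (norm (h - k))\<^sup>2 = 2 * (norm h)\<^sup>2 + 2 * (norm k)\<^sup>2"
    by (simp add: power2_norm_eq_inner inner_add_left inner_add_right inner_diff_left inner_diff_right inner_commute)
  have "4 * (k \<bullet> B h) = (h + k) \<bullet> B (h + k) - (h - k) \<bullet> B (h - k)" using e1 e2 by simp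
  also have "\<dots> \<le> D * (norm (h + k))\<^sup>2 + D * (norm (h - k))\<^sup>2"
    using q[of "h + k"] q[of "h - k"] by linarith
  also have "\<dots> = D * ((norm (h + k))\<^sup>2 + (norm (h - k))\<^sup>2)" by (simp add: distrib_left)
  also have "\<dots> = 4 * D * (norm h)\<^sup>2" using par nk by simp
  finally have A: "k \<bullet> B h \<le> D * (norm h)\<^sup>2" by simp
  have "k \<bullet> B h = c * (norm (B h))\<^sup>2" unfolding k_def by (simp add: power2_norm_eq_inner)
  also have "\<dots> = norm h * norm (B h)" unfolding c_def using False by (simp add: power2_eq_square)
  finally have "norm h * norm (B h) \<le> norm h * (D * norm h)" using A by (simp add: power2_eq_square algebra_simps)
  thus ?thesis using hne by simp
qed

lemma convex_tangent:
  fixes f :: "'a::real_normed_vector \<Rightarrow> real"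
  assumes cv: "convex_on S f" and a: "a \<in> S" and b: "b \<in> S" and d: "(f has_derivative f') (at a)"
  shows "f' (b - a) \<le> f b - f a"
proof (rule deriv_dir_upper[OF d])
  have "\<forall>\<^sub>F t in at_right (0::real). t < 1"
    using order_tendstoD(2)[OF tendsto_ident_at[of "0::real" "{0<..}"], of 1] by simp
  thus "\<forall>\<^sub>F t in at_right 0. f (a + t *\<^sub>R (b - a)) - f a \<le> t * (f b - f a)"
    using eventually_at_right_less[of 0]
  proof eventually_elim
    case (elim t)
    have "f ((1 - t) *\<^sub>R a + t *\<^sub>R b) \<le> (1 - t) * f a + t * f b"
      using cv a b elim unfolding convex_on_def by auto
    moreover have "(1 - t) *\<^sub>R a + t *\<^sub>R b = a + t *\<^sub>R (b - a)" by (simp add: algebra_simps)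
    ultimately show ?case by (simp add: algebra_simps)
  qed
qed

lemma grad_tangent:
  fixes f :: "'a::real_inner \<Rightarrow> real"
  assumes cv: "convex_on S f" and a: "a \<in> S" and b: "b \<in> S" and d: "(f has_derivative (\<lambda>h. g \<bullet> h)) (at a)"
  shows "f b \<ge> f a + g \<bullet> (b - a)"
  using convex_tangent[OF cv a b d] by simp

lemma strong_tangent:
  fixes f :: "'a::real_inner \<Rightarrow> real"
  assumes cv: "strongly_convex_on S f c" and a: "a \<in> S" and b: "b \<in> S"
    and d: "(f has_derivative (\<lambda>h. g \<bullet> h)) (at a)"
  shows "f b \<ge> f a + g \<bullet> (b - a) + c / 2 * (norm (b - a))\<^sup>2"
proof -
  have d2: "((\<lambda>x. f x - (c / 2) * (norm x)\<^sup>2) has_derivative (\<lambda>h. (g - c *\<^sub>R a) \<bullet> h)) (at a)"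
  proof -
    have n: "((\<lambda>x. x \<bullet> x) has_derivative (\<lambda>h. a \<bullet> h + h \<bullet> a)) (at a)"
      using has_derivative_inner[OF has_derivative_ident has_derivative_ident, of a UNIV] by simp
    have "((\<lambda>x. f x - (c / 2) * (x \<bullet> x)) has_derivative (\<lambda>h. g \<bullet> h - (c / 2) * (a \<bullet> h + h \<bullet> a))) (at a)"
      by (rule has_derivative_diff[OF d has_derivative_mult_right[OF n]])
    moreover have "(\<lambda>h. g \<bullet> h - (c / 2) * (a \<bullet> h + h \<bullet> a)) = (\<lambda>h. (g - c *\<^sub>R a) \<bullet> h)"
      by (auto simp: inner_diff_left inner_commute algebra_simps)
    ultimately show ?thesis by (simp add: power2_norm_eq_inner)
  qed
  from grad_tangent[OF cv[unfolded strongly_convex_on_def] a b d2]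
  have "f b - c / 2 * (norm b)\<^sup>2 \<ge> f a - c / 2 * (norm a)\<^sup>2 + (g - c *\<^sub>R a) \<bullet> (b - a)" .
  moreover have "(norm (b - a))\<^sup>2 = (norm b)\<^sup>2 - 2 * (a \<bullet> b) + (norm a)\<^sup>2"
    by (simp add: power2_norm_eq_inner inner_diff_left inner_diff_right inner_commute)
  ultimately show ?thesis
    by (simp add: inner_diff_left inner_diff_right power2_norm_eq_inner algebra_simps inner_commute)
qed

lemma psd_of_convex:
  fixes f :: "'a::real_inner \<Rightarrow> real"
  assumes cv: "convex_on S f" and S: "open S" and u: "u \<in> S"
    and fg: "\<And>w. w \<in> S \<Longrightarrow> (f has_derivative (\<lambda>h. g w \<bullet> h)) (at w)"
    and gH: "(g has_derivative H) (at u)"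
  shows "H h \<bullet> h \<ge> 0"
proof -
  have mono: "(g b - g a) \<bullet> (b - a) \<ge> 0" if "a \<in> S" "b \<in> S" for a b
    using grad_tangent[OF cv that fg[OF that(1)]] grad_tangent[OF cv that(2,1) fg[OF that(2)]]
    by (simp add: inner_diff_left inner_diff_right inner_commute)
  have dq: "((\<lambda>w. g w \<bullet> h) has_derivative (\<lambda>k. H k \<bullet> h)) (at u)"
    using has_derivative_inner_left[OF gH, of h] by simp
  obtain r where r: "r > 0" "ball u r \<subseteq> S" using S u open_contains_ball by blast
  show ?thesis
  proof (rule deriv_dir_lower[OF dq, where c=0 and v=h])
    have "0 < norm h + 1" by (simp add: add_nonneg_pos)
    hence "0 < r / (norm h + 1)" using r by simp
    hence "\<forall>\<^sub>F t in at_right (0::real). t < r / (norm h + 1)"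
      using order_tendstoD(2)[OF tendsto_ident_at[of "0::real" "{0<..}"], of "r / (norm h + 1)"] by simp
    thus "\<forall>\<^sub>F t in at_right 0. g (u + t *\<^sub>R h) \<bullet> h - g u \<bullet> h \<ge> t * 0"
      using eventually_at_right_less[of 0]
    proof eventually_elim
      case (elim t)
      have "t * norm h \<le> t * (norm h + 1)" using elim by simp
      also have "\<dots> < r" using elim by (simp add: pos_less_divide_eq add_nonneg_pos)
      finally have "u + t *\<^sub>R h \<in> ball u r" using elim by (simp add: dist_norm)
      hence "u + t *\<^sub>R h \<in> S" using r by blast
      from mono[OF u this] have "t * ((g (u + t *\<^sub>R h) - g u) \<bullet> h) \<ge> 0" by simp
      hence "(g (u + t *\<^sub>R h) - g u) \<bullet> h \<ge> 0" using elim by (simp add: zero_le_mult_iff)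
      thus ?case by (simp add: inner_diff_left)
    qed
  qed
qed


lemma path_deriv:
  assumes "(f has_derivative f') (at (w + t *\<^sub>R v))"
  shows "((\<lambda>s. f (w + s *\<^sub>R v)) has_derivative (\<lambda>s. f' (s *\<^sub>R v))) (at t)"
proof -
  have "((\<lambda>s. w + s *\<^sub>R v) has_derivative (\<lambda>s. s *\<^sub>R v)) (at t)"
    by (auto intro!: derivative_eq_intros)
  from has_derivative_compose[OF this assms] show ?thesis by simp
qed

lemma path_deriv_real:
  fixes f :: "'a::real_normed_vector \<Rightarrow> real"
  assumes "(f has_derivative f') (at (w + t *\<^sub>R v))"
  shows "((\<lambda>s. f (w + s *\<^sub>R v)) has_real_derivative f' v) (at t)"
proof -
  have l: "linear f'" using has_derivative_bounded_linear[OF assms] bounded_linear.linear by blast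
  have "(\<lambda>s. f' (s *\<^sub>R v)) = (\<lambda>s. s * f' v)" using l by (simp add: linear_scale)
  thus ?thesis using path_deriv[OF assms] by (simp add: has_field_derivative_def mult.commute[of _ "f' v"])
qed

lemma quad_lower:
  fixes \<phi> :: "'a::real_inner \<Rightarrow> real" and g :: "'a \<Rightarrow> 'a"
  assumes K: "convex K" and u: "u \<in> K" and w: "w \<in> K"
    and d1: "\<And>p. p \<in> K \<Longrightarrow> (\<phi> has_derivative (\<lambda>h. g p \<bullet> h)) (at p)"
    and d2: "\<And>p. p \<in> K \<Longrightarrow> (g has_derivative H p) (at p)"
    and hb: "\<And>p. p \<in> K \<Longrightarrow> c * (norm (u - w))\<^sup>2 \<le> (u - w) \<bullet> H p (u - w)"
  shows "\<phi> u \<ge> \<phi> w + g w \<bullet> (u - w) + c / 2 * (norm (u - w))\<^sup>2"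
proof -
  define v where "v = u - w"
  have inK: "w + t *\<^sub>R v \<in> K" if "0 \<le> t" "t \<le> 1" for t
  proof -
    have "(1 - t) *\<^sub>R w + t *\<^sub>R u \<in> K" using K u w that by (simp add: convex_alt)
    moreover have "(1 - t) *\<^sub>R w + t *\<^sub>R u = w + t *\<^sub>R v" by (simp add: v_def algebra_simps)
    ultimately show ?thesis by simp
  qed
  define chi where "chi t = g (w + t *\<^sub>R v) \<bullet> v - c * t * (norm v)\<^sup>2" for t
  define chi' where "chi' t = H (w + t *\<^sub>R v) v \<bullet> v - c * (norm v)\<^sup>2" for t
  define psi where "psi t = \<phi> (w + t *\<^sub>R v) - t * (g w \<bullet> v) - c * t\<^sup>2 / 2 * (norm v)\<^sup>2" for t
  define psi' where "psi' t = chi t - chi 0" for t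
  have dchi: "(chi has_real_derivative chi' t) (at t)" if "0 \<le> t" "t \<le> 1" for t
  proof -
    have "((\<lambda>p. g p \<bullet> v) has_derivative (\<lambda>k. H (w + t *\<^sub>R v) k \<bullet> v)) (at (w + t *\<^sub>R v))"
      using has_derivative_inner_left[OF d2[OF inK[OF that]], of v] by simp
    from path_deriv_real[OF this]
    have "((\<lambda>s. g (w + s *\<^sub>R v) \<bullet> v) has_real_derivative H (w + t *\<^sub>R v) v \<bullet> v) (at t)" by simp
    hence "((\<lambda>s. g (w + s *\<^sub>R v) \<bullet> v - (c * (norm v)\<^sup>2) * s) has_real_derivative H (w + t *\<^sub>R v) v \<bullet> v - (c * (norm v)\<^sup>2) * 1) (at t)"
      by (intro derivative_intros) auto
    thus ?thesis unfolding chi_def chi'_def by (simp add: algebra_simps)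
  qed
  have dpsi: "(psi has_real_derivative psi' t) (at t)" if "0 \<le> t" "t \<le> 1" for t
  proof -
    from path_deriv_real[OF d1[OF inK[OF that]]]
    have "((\<lambda>s. \<phi> (w + s *\<^sub>R v)) has_real_derivative g (w + t *\<^sub>R v) \<bullet> v) (at t)" by simp
    hence "((\<lambda>s. \<phi> (w + s *\<^sub>R v) - s * (g w \<bullet> v) - (c / 2 * (norm v)\<^sup>2) * s\<^sup>2) has_real_derivative
        g (w + t *\<^sub>R v) \<bullet> v - 1 * (g w \<bullet> v) - (c / 2 * (norm v)\<^sup>2) * (2 * t)) (at t)"
      by (intro derivative_eq_intros) auto
    thus ?thesis unfolding psi_def psi'_def chi_def by (simp add: algebra_simps)
  qed
  obtain \<xi> where \<xi>: "0 < \<xi>" "\<xi> < 1" "psi 1 - psi 0 = (1 - 0) * psi' \<xi>"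
    using MVT2[of 0 1 psi psi'] dpsi by auto
  obtain \<eta> where \<eta>: "0 < \<eta>" "\<eta> < \<xi>" "chi \<xi> - chi 0 = (\<xi> - 0) * chi' \<eta>"
    using MVT2[of 0 \<xi> chi chi'] dchi \<xi> by auto
  have "chi' \<eta> \<ge> 0"
    using hb[OF inK[of \<eta>]] \<eta> \<xi> unfolding chi'_def v_def by (simp add: inner_commute)
  hence "psi' \<xi> \<ge> 0" unfolding psi'_def using \<eta> \<xi> by simp
  hence "psi 1 \<ge> psi 0" using \<xi> by simp
  thus ?thesis unfolding psi_def v_def by (simp add: algebra_simps)
qed


lemma maxtr_elem: "(z::real) powi (- int n) = 1 / z ^ n"
  by (simp add: power_int_minus_divide)

lemma le_maxtr: "n \<le> K \<Longrightarrow> \<bar>s n\<bar> / z ^ n \<le> maxtr s K z"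
  unfolding maxtr_def by (rule Max_ge) (auto simp: maxtr_elem)

lemma maxtr_le: "(\<And>n. n \<le> K \<Longrightarrow> \<bar>s n\<bar> / z ^ n \<le> B) \<Longrightarrow> maxtr s K z \<le> B"
  unfolding maxtr_def by (subst Max_le_iff) (auto simp: maxtr_elem)

lemma maxtr_nonneg: "z > 0 \<Longrightarrow> 0 \<le> maxtr s K z"
  using le_maxtr[of 0 K s z] by simp

lemma transform_bound:
  fixes s e :: "nat \<Rightarrow> real"
  assumes rec: "\<And>n. n < K \<Longrightarrow> s (Suc n) \<le> lam * s n + c * e n"
    and snn: "\<And>n. s n \<ge> 0"
    and lam: "0 \<le> lam" "lam < z"
    and c: "c \<ge> 0"
    and E: "\<And>n. n \<le> K \<Longrightarrow> e n / z ^ n \<le> EE" and EE: "EE \<ge> 0"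
  shows "maxtr s K z \<le> c * EE / (z - lam) + z / (z - lam) * s 0"
proof -
  define B where "B = c * EE / (z - lam) + z / (z - lam) * s 0"
  have z: "z > 0" using lam by simp
  have zl: "z - lam > 0" using lam by simp
  have BE: "(z - lam) * B = c * EE + z * s 0"
  proof -
    have "(z - lam) * (c * EE / (z - lam)) = c * EE" "(z - lam) * (z / (z - lam) * s 0) = z * s 0"
      using zl by simp_all
    thus ?thesis unfolding B_def by (simp add: distrib_left)
  qed
  have B0: "s 0 \<le> B"
  proof -
    have "s 0 * (z - lam) \<le> c * EE + z * s 0" using snn[of 0] lam c EE by (simp add: algebra_simps mult_nonneg_nonneg)
    hence "s 0 * (z - lam) \<le> B * (z - lam)" using BE by (simp add: mult.commute)
    thus ?thesis using zl by simp
  qed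
  have "n \<le> K \<Longrightarrow> s n / z ^ n \<le> B" for n
  proof (induction n)
    case 0 thus ?case using B0 by simp
  next
    case (Suc n)
    hence IH: "s n / z ^ n \<le> B" and nK: "n < K" by auto
    have zn: "z ^ n > 0" using z by simp
    have "s (Suc n) / z ^ Suc n \<le> (lam * s n + c * e n) / z ^ Suc n"
      using rec[OF nK] zn z by (simp add: divide_right_mono)
    also have "\<dots> = (lam * (s n / z ^ n) + c * (e n / z ^ n)) / z"
      using zn z by (simp add: field_simps)
    also have "\<dots> \<le> (lam * B + c * EE) / z"
      using IH E[of n] nK lam c z by (intro divide_right_mono add_mono mult_left_mono) auto
    also have "\<dots> \<le> B"
    proof -
      have "lam * B + c * EE \<le> z * B" using BE snn[of 0] z by (simp add: algebra_simps)
      thus ?thesis using z by (simp add: divide_le_eq mult.commute)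
    qed
    finally show ?case .
  qed
  thus ?thesis unfolding B_def[symmetric] using snn by (intro maxtr_le) auto
qed


definition vc :: "('i::finite \<Rightarrow> real^'d::finite) \<Rightarrow> (real^'d)^'i" where
  "vc v = (\<chi> i. v i)"

lemma norm_vc_sq: "(norm (vc v))\<^sup>2 = stack_sq v"
  unfolding vc_def stack_sq_def norm_vec_def L2_set_def
  by (simp add: sum_nonneg)

lemma norm_vc: "norm (vc v) = sqrt (stack_sq v)"
  using norm_vc_sq[of v] by (metis norm_ge_zero real_sqrt_abs real_sqrt_unique abs_of_nonneg)

lemma stack_sq_nonneg: "stack_sq v \<ge> 0"
  unfolding stack_sq_def by (simp add: sum_nonneg)

lemma vc_add: "vc (\<lambda>i. a i + b i) = vc a + vc b"
  unfolding vc_def by (simp add: vec_eq_iff)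

lemma stack_tri: fixes a b :: "'i::finite \<Rightarrow> real^'d::finite" shows "sqrt (stack_sq (\<lambda>i. a i + b i)) \<le> sqrt (stack_sq a) + sqrt (stack_sq b)"
  unfolding norm_vc[symmetric] vc_add by (rule norm_triangle_ineq)

lemma stack_scale: "stack_sq (\<lambda>i. c *\<^sub>R a i) = c\<^sup>2 * stack_sq a"
  unfolding stack_sq_def by (simp add: sum_distrib_left power_mult_distrib)

lemma sqrt_stack_scale: "sqrt (stack_sq (\<lambda>i. c *\<^sub>R a i)) = \<bar>c\<bar> * sqrt (stack_sq a)"
  unfolding stack_scale by (simp add: real_sqrt_mult)

lemma jensen_norm:
  fixes v :: "'a \<Rightarrow> 'b::real_normed_vector"
  assumes "finite S" "(\<Sum>j\<in>S. w j) = 1" "\<And>j. j \<in> S \<Longrightarrow> w j \<ge> 0"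
  shows "(norm (\<Sum>j\<in>S. w j *\<^sub>R v j))\<^sup>2 \<le> (\<Sum>j\<in>S. w j * (norm (v j))\<^sup>2)"
proof -
  have ne: "S \<noteq> {}" using assms(2) by auto
  have "norm (\<Sum>j\<in>S. w j *\<^sub>R v j) \<le> (\<Sum>j\<in>S. norm (w j *\<^sub>R v j))" by (rule norm_sum)
  also have "\<dots> = (\<Sum>j\<in>S. w j * norm (v j))" using assms(3) by (intro sum.cong) auto
  finally have A: "norm (\<Sum>j\<in>S. w j *\<^sub>R v j) \<le> (\<Sum>j\<in>S. w j * norm (v j))" .
  have "(norm (\<Sum>j\<in>S. w j *\<^sub>R v j))\<^sup>2 \<le> (\<Sum>j\<in>S. w j * norm (v j))\<^sup>2"
    using A by (intro power_mono) auto
  also have "\<dots> \<le> (\<Sum>j\<in>S. w j * (norm (v j))\<^sup>2)"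
    using convex_on_sum[OF assms(1) ne convex_power2, of w "\<lambda>j. norm (v j)"] assms by simp
  finally show ?thesis .
qed

lemma jensen_real:
  fixes v :: "'a \<Rightarrow> real"
  assumes "finite S" "(\<Sum>j\<in>S. w j) = 1" "\<And>j. j \<in> S \<Longrightarrow> w j \<ge> 0"
  shows "(\<Sum>j\<in>S. w j * v j)\<^sup>2 \<le> (\<Sum>j\<in>S. w j * (v j)\<^sup>2)"
proof -
  have ne: "S \<noteq> {}" using assms(2) by auto
  show ?thesis using convex_on_sum[OF assms(1) ne convex_power2, of w v] assms by simp
qed

lemma stack_W:
  fixes W :: "'i::finite \<Rightarrow> 'i \<Rightarrow> real" and v :: "'i \<Rightarrow> 'a::real_inner"
  assumes nn: "\<And>i j. W i j \<ge> 0" and rows: "\<And>i. (\<Sum>j\<in>UNIV. W i j) = 1"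
    and cols: "\<And>j. (\<Sum>i\<in>UNIV. W i j) = 1"
  shows "stack_sq (\<lambda>i. \<Sum>j\<in>UNIV. W i j *\<^sub>R v j) \<le> stack_sq v"
proof -
  have "stack_sq (\<lambda>i. \<Sum>j\<in>UNIV. W i j *\<^sub>R v j) \<le> (\<Sum>i\<in>UNIV. \<Sum>j\<in>UNIV. W i j * (norm (v j))\<^sup>2)"
    unfolding stack_sq_def using jensen_norm[OF _ rows nn] by (intro sum_mono) auto
  also have "\<dots> = (\<Sum>j\<in>UNIV. (\<Sum>i\<in>UNIV. W i j) * (norm (v j))\<^sup>2)"
    by (subst sum.swap) (simp add: sum_distrib_right)
  also have "\<dots> = stack_sq v" unfolding stack_sq_def cols by simp
  finally show ?thesis .
qed

lemma sonata_M_linear: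
  "linear (\<lambda>x :: (real^'d::finite)^'i::finite. \<chi> i. \<Sum>j\<in>UNIV. (W i j - 1 / real CARD('i)) *\<^sub>R (x $ j))"
  by (rule linearI) (simp_all add: vec_eq_iff sum.distrib scaleR_add_right scaleR_sum_right mult.commute mult.left_commute)

lemma rho_bound:
  fixes W :: "'i::finite \<Rightarrow> 'i \<Rightarrow> real" and v :: "'i \<Rightarrow> real^'d::finite"
  shows "stack_sq (\<lambda>i. \<Sum>j\<in>UNIV. (W i j - 1 / real CARD('i)) *\<^sub>R v j) \<le> (sonata_rho W TYPE('d))\<^sup>2 * stack_sq v"
proof -
  define M where "M = (\<lambda>x :: (real^'d)^'i. \<chi> i. \<Sum>j\<in>UNIV. (W i j - 1 / real CARD('i)) *\<^sub>R (x $ j))"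
  have bl: "bounded_linear M" unfolding M_def using sonata_M_linear linear_conv_bounded_linear by blast
  have eq: "M (vc v) = vc (\<lambda>i. \<Sum>j\<in>UNIV. (W i j - 1 / real CARD('i)) *\<^sub>R v j)"
    unfolding M_def vc_def by simp
  have r: "sonata_rho W TYPE('d) = onorm M" unfolding sonata_rho_def M_def by simp
  have "norm (M (vc v)) \<le> onorm M * norm (vc v)" by (rule onorm[OF bl])
  hence "(norm (M (vc v)))\<^sup>2 \<le> (onorm M * norm (vc v))\<^sup>2" by (intro power_mono) auto
  thus ?thesis unfolding eq r power_mult_distrib norm_vc_sq .
qed

lemma rho_nonneg: "sonata_rho W TYPE('d::finite) \<ge> 0"
  unfolding sonata_rho_def
  using sonata_M_linear linear_conv_bounded_linear onorm_pos_le by blast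

lemma sq_split: fixes A B \<epsilon> :: real shows "0 \<le> A \<Longrightarrow> 0 \<le> B \<Longrightarrow> \<epsilon> > 0 \<Longrightarrow> (A + B)\<^sup>2 \<le> (1 + \<epsilon>) * A\<^sup>2 + (1 + 1 / \<epsilon>) * B\<^sup>2"
proof -
  assume e: "\<epsilon> > 0"
  have "0 \<le> (\<epsilon> * A - B)\<^sup>2 / \<epsilon>" using e by simp
  also have "(\<epsilon> * A - B)\<^sup>2 / \<epsilon> = \<epsilon> * A\<^sup>2 - 2 * A * B + B\<^sup>2 / \<epsilon>"
    using e by (simp add: power2_eq_square field_simps)
  finally show ?thesis by (simp add: power2_eq_square field_simps)
qed


locale sonata =
  fixes Kset Oset :: "(real^'d::finite) set"
    and f :: "'i::finite \<Rightarrow> real^'d \<Rightarrow> real"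
    and gf :: "'i \<Rightarrow> real^'d \<Rightarrow> real^'d"
    and Hf :: "'i \<Rightarrow> real^'d \<Rightarrow> real^'d \<Rightarrow> real^'d"
    and G :: "real^'d \<Rightarrow> real"
    and \<mu> L :: real and Li :: "'i \<Rightarrow> real"
    and xstar :: "real^'d"
    and E :: "('i \<times> 'i) set" and W :: "'i \<Rightarrow> 'i \<Rightarrow> real"
    and ft :: "'i \<Rightarrow> real^'d \<Rightarrow> real^'d \<Rightarrow> real"
    and gft :: "'i \<Rightarrow> real^'d \<Rightarrow> real^'d \<Rightarrow> real^'d"
    and Hft :: "'i \<Rightarrow> real^'d \<Rightarrow> real^'d \<Rightarrow> real^'d \<Rightarrow> real^'d"
    and Lt \<mu>t Dl Du :: "'i \<Rightarrow> real"
    and \<alpha> \<epsilon>opt \<epsilon>x \<epsilon>y :: real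
    and x y xhat :: "nat \<Rightarrow> 'i \<Rightarrow> real^'d"
    and m :: real and F :: "real^'d \<Rightarrow> real" and HF :: "real^'d \<Rightarrow> real^'d \<Rightarrow> real^'d"
    and U :: "real^'d \<Rightarrow> real" and Ustar Lmax :: real and D :: "'i \<Rightarrow> real"
    and \<mu>tmin Dlmin Dmax \<rho> a \<sigma> \<eta> :: real and d :: "nat \<Rightarrow> 'i \<Rightarrow> real^'d"
    and p :: "nat \<Rightarrow> real" and C1 C2 :: real
  assumes m_def: "m = real CARD('i)"
    and F_def: "F = (\<lambda>u. (1 / m) * (\<Sum>i\<in>UNIV. f i u))"
    and HF_def: "HF = (\<lambda>u h. (1 / m) *\<^sub>R (\<Sum>i\<in>UNIV. Hf i u h))"
    and U_def: "U = (\<lambda>u. F u + G u)"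
    and Ustar_def: "Ustar = F xstar + G xstar"
    and Lmax_def: "Lmax = Max (range Li)"
    and D_def: "D = (\<lambda>i. max \<bar>Dl i\<bar> \<bar>Du i\<bar>)"
    and mutmin_def: "\<mu>tmin = Min (range \<mu>t)"
    and Dlmin_def: "Dlmin = Min (range Dl)"
    and Dmax_def: "Dmax = Max (range D)"
    and rho_def: "\<rho> = sonata_rho W TYPE('d)"
    and a_def: "a = (1 - \<alpha> / 2) * \<mu>tmin + Dlmin / 2 * \<alpha> - \<epsilon>opt / 2"
    and sigma_def: "\<sigma> = 1 - \<alpha> * a / (Dmax\<^sup>2 / \<mu> + a)"
    and eta_def: "\<eta> = (\<alpha> / (2 * \<epsilon>opt) * (Dmax\<^sup>2 / \<mu>) + \<alpha> / \<mu> * a) / (Dmax\<^sup>2 / \<mu> + a)"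
    and d_def: "d = (\<lambda>\<nu> i. xhat \<nu> i - x \<nu> i)"
    and p_def: "p = (\<lambda>\<nu>. \<Sum>i\<in>UNIV. U (x \<nu> i) - Ustar)"
    and C1_def: "C1 = 6 / \<mu> * ((Dmax / \<mu>tmin + 1)\<^sup>2 + 4 * Lmax\<^sup>2 / \<mu>tmin\<^sup>2)"
    and C2_def: "C2 = 4 / \<mu>tmin\<^sup>2"
    and K_nonempty: "Kset \<noteq> {}" and K_closed: "closed Kset" and K_convex: "convex Kset"
    and O_open: "open Oset" and K_sub_O: "Kset \<subseteq> Oset"
    and f_grad: "\<And>i u. u \<in> Oset \<Longrightarrow> (f i has_derivative (\<lambda>h. gf i u \<bullet> h)) (at u)"
    and f_hess: "\<And>i u. u \<in> Oset \<Longrightarrow> (gf i has_derivative Hf i u) (at u)"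
    and f_convex: "\<And>i. convex_on Oset (f i)"
    and mu_pos: "\<mu> > 0"
    and F_hess_bounds: "\<And>u h. u \<in> Kset \<Longrightarrow>
        \<mu> * (norm h)\<^sup>2 \<le> h \<bullet> HF u h \<and> h \<bullet> HF u h \<le> L * (norm h)\<^sup>2"
    and G_convex: "convex_on Kset G"
    and xstar_in: "xstar \<in> Kset"
    and xstar_min: "\<And>u. u \<in> Kset \<Longrightarrow> U xstar \<le> U u"
    and xstar_unique: "\<And>u. u \<in> Kset \<Longrightarrow> U u = U xstar \<Longrightarrow> u = xstar"
    and fi_hess_bound: "\<And>i u h. u \<in> Kset \<Longrightarrow> h \<bullet> Hf i u h \<le> Li i * (norm h)\<^sup>2"
    and E_sym: "\<And>i j. (i, j) \<in> E \<Longrightarrow> (j, i) \<in> E"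
    and E_connected: "\<And>i j. (i, j) \<in> E\<^sup>*"
    and W_diag: "\<And>i. W i i > 0"
    and W_edge: "\<And>i j. i \<noteq> j \<Longrightarrow> (W i j > 0 \<longleftrightarrow> (i, j) \<in> E)"
    and W_nonedge: "\<And>i j. i \<noteq> j \<Longrightarrow> (i, j) \<notin> E \<Longrightarrow> W i j = 0"
    and W_nonneg: "\<And>i j. W i j \<ge> 0"
    and W_rows: "\<And>i. (\<Sum>j\<in>UNIV. W i j) = 1"
    and W_cols: "\<And>j. (\<Sum>i\<in>UNIV. W i j) = 1"
    and ft_C2: "\<And>i. C2_on (Oset \<times> Oset) (\<lambda>(u, v). ft i u v)"
    and ft_grad: "\<And>i u v. u \<in> Oset \<Longrightarrow> v \<in> Oset \<Longrightarrow>
        ((\<lambda>w. ft i w v) has_derivative (\<lambda>h. gft i u v \<bullet> h)) (at u)"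
    and ft_hess: "\<And>i u v. u \<in> Oset \<Longrightarrow> v \<in> Oset \<Longrightarrow>
        ((\<lambda>w. gft i w v) has_derivative Hft i u v) (at u)"
    and ft_consistent: "\<And>i u. u \<in> Oset \<Longrightarrow> gft i u u = gf i u"
    and ft_lipschitz: "\<And>i u v w. v \<in> Kset \<Longrightarrow> u \<in> Kset \<Longrightarrow> w \<in> Kset \<Longrightarrow>
        norm (gft i u v - gft i w v) \<le> Lt i * norm (u - w)"
    and ft_strongly_convex: "\<And>i v. v \<in> Kset \<Longrightarrow> strongly_convex_on Kset (\<lambda>w. ft i w v) (\<mu>t i)"
    and mut_pos: "\<And>i. \<mu>t i > 0"
    and Dl_le_Du: "\<And>i. Dl i \<le> Du i"
    and ft_hess_bounds: "\<And>i u v h. u \<in> Kset \<Longrightarrow> v \<in> Kset \<Longrightarrow>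
        Dl i * (norm h)\<^sup>2 \<le> h \<bullet> (Hft i u v h - HF u h) \<and> h \<bullet> (Hft i u v h - HF u h) \<le> Du i * (norm h)\<^sup>2"
    and x0_in: "\<And>i. x 0 i \<in> Kset"
    and y0: "\<And>i. y 0 i = gf i (x 0 i)"
    and xhat_in: "\<And>\<nu> i. xhat \<nu> i \<in> Kset"
    and xhat_min: "\<And>\<nu> i u. u \<in> Kset \<Longrightarrow>
        ft i (xhat \<nu> i) (x \<nu> i) + (y \<nu> i - gf i (x \<nu> i)) \<bullet> (xhat \<nu> i - x \<nu> i) + G (xhat \<nu> i)
        \<le> ft i u (x \<nu> i) + (y \<nu> i - gf i (x \<nu> i)) \<bullet> (u - x \<nu> i) + G u"
    and x_update: "\<And>\<nu> i. x (Suc \<nu>) i = (\<Sum>j\<in>UNIV. W i j *\<^sub>R (x \<nu> j + \<alpha> *\<^sub>R d \<nu> j))"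
    and y_update: "\<And>\<nu> i. y (Suc \<nu>) i =
        (\<Sum>j\<in>UNIV. W i j *\<^sub>R (y \<nu> j + gf j (x (Suc \<nu>) j) - gf j (x \<nu> j)))"
    and alpha_range: "0 < \<alpha>" "\<alpha> \<le> 1"
    and eps_opt_pos: "\<epsilon>opt > 0" and a_pos: "a > 0"
    and eps_x_pos: "\<epsilon>x > 0" and eps_y_pos: "\<epsilon>y > 0"

context sonata begin

lemma card_pos: "m > 0" "m \<ge> 1"
  using m_def by (auto simp: Suc_le_eq)

lemma convO: "convex Oset"
  using f_convex unfolding convex_on_def by blast

lemma KO: "u \<in> Kset \<Longrightarrow> u \<in> Oset"
  using K_sub_O by blast

lemma d_eq: "d \<nu> i = xhat \<nu> i - x \<nu> i"
  using d_def by simp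

lemma x_in: "x \<nu> i \<in> Kset"
proof (induction \<nu> arbitrary: i)
  case 0 thus ?case using x0_in by simp
next
  case (Suc \<nu>)
  have pts: "x \<nu> j + \<alpha> *\<^sub>R d \<nu> j \<in> Kset" for j
  proof -
    have "(1 - \<alpha>) *\<^sub>R x \<nu> j + \<alpha> *\<^sub>R xhat \<nu> j \<in> Kset"
      using K_convex Suc.IH xhat_in alpha_range by (simp add: convex_alt)
    moreover have "(1 - \<alpha>) *\<^sub>R x \<nu> j + \<alpha> *\<^sub>R xhat \<nu> j = x \<nu> j + \<alpha> *\<^sub>R d \<nu> j"
      by (simp add: d_eq algebra_simps)
    ultimately show ?thesis by simp
  qed
  show ?case unfolding x_update
    by (rule convex_sum[OF _ K_convex]) (use W_rows W_nonneg pts in auto)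
qed

lemma step_in: "x \<nu> i + \<alpha> *\<^sub>R d \<nu> i \<in> Kset"
proof -
  have "(1 - \<alpha>) *\<^sub>R x \<nu> i + \<alpha> *\<^sub>R xhat \<nu> i \<in> Kset"
    using K_convex x_in xhat_in alpha_range by (simp add: convex_alt)
  moreover have "(1 - \<alpha>) *\<^sub>R x \<nu> i + \<alpha> *\<^sub>R xhat \<nu> i = x \<nu> i + \<alpha> *\<^sub>R d \<nu> i"
    by (simp add: d_eq algebra_simps)
  ultimately show ?thesis by simp
qed

definition gF :: "real^'d \<Rightarrow> real^'d" where
  "gF u = (1 / m) *\<^sub>R (\<Sum>i\<in>UNIV. gf i u)"

lemma F_deriv: "u \<in> Oset \<Longrightarrow> (F has_derivative (\<lambda>h. gF u \<bullet> h)) (at u)"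
proof -
  assume u: "u \<in> Oset"
  have "((\<lambda>u. (1 / m) * (\<Sum>i\<in>UNIV. f i u)) has_derivative (\<lambda>h. (1 / m) * (\<Sum>i\<in>UNIV. gf i u \<bullet> h))) (at u)"
    by (intro derivative_intros f_grad u)
  moreover have "(\<lambda>h. (1 / m) * (\<Sum>i\<in>UNIV. gf i u \<bullet> h)) = (\<lambda>h. gF u \<bullet> h)"
    unfolding gF_def by (simp add: inner_sum_left)
  ultimately show ?thesis unfolding F_def by simp
qed

lemma gF_deriv: "u \<in> Oset \<Longrightarrow> (gF has_derivative HF u) (at u)"
proof -
  assume u: "u \<in> Oset"
  have "((\<lambda>u. (1 / m) *\<^sub>R (\<Sum>i\<in>UNIV. gf i u)) has_derivative (\<lambda>h. (1 / m) *\<^sub>R (\<Sum>i\<in>UNIV. Hf i u h))) (at u)"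
    by (intro derivative_intros f_hess u)
  thus ?thesis unfolding HF_def gF_def[abs_def] by simp
qed

lemma Hf_sym: "u \<in> Oset \<Longrightarrow> Hf i u h \<bullet> k = Hf i u k \<bullet> h"
  by (rule hess_sym[OF O_open _ f_grad f_hess])

lemma HF_sym: "u \<in> Oset \<Longrightarrow> HF u h \<bullet> k = HF u k \<bullet> h"
  unfolding HF_def by (simp add: inner_sum_left Hf_sym)

lemma Hft_sym: "u \<in> Oset \<Longrightarrow> v \<in> Oset \<Longrightarrow> Hft i u v h \<bullet> k = Hft i u v k \<bullet> h"
  by (rule hess_sym[where f="\<lambda>w. ft i w v" and g="\<lambda>w. gft i w v", OF O_open _ ft_grad ft_hess])

lemma Hf_psd: "u \<in> Oset \<Longrightarrow> Hf i u h \<bullet> h \<ge> 0"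
  by (rule psd_of_convex[OF f_convex O_open _ f_grad f_hess])

lemma Hf_lin: "u \<in> Oset \<Longrightarrow> linear (Hf i u)"
  using has_derivative_bounded_linear[OF f_hess] bounded_linear.linear by blast

lemma HF_lin: "u \<in> Oset \<Longrightarrow> linear (HF u)"
  using has_derivative_bounded_linear[OF gF_deriv] bounded_linear.linear by blast

lemma Hft_lin: "u \<in> Oset \<Longrightarrow> v \<in> Oset \<Longrightarrow> linear (Hft i u v)"
  using has_derivative_bounded_linear[OF ft_hess] bounded_linear.linear by blast

lemma Hf_norm: assumes u: "u \<in> Kset" shows "norm (Hf i u h) \<le> Li i * norm h"
proof (rule sym_bound[OF Hf_lin])
  show "u \<in> Oset" using u KO by blast
  show "Hf i u a \<bullet> b = Hf i u b \<bullet> a" for a b using Hf_sym u KO by blast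
  show "\<bar>w \<bullet> Hf i u w\<bar> \<le> Li i * (norm w)\<^sup>2" for w
    using Hf_psd[where u=u and i=i and h=w] fi_hess_bound[OF u, where i=i and h=w] u KO by (simp add: inner_commute)
qed

lemma Li_nonneg: "Li i \<ge> 0"
proof -
  obtain u where u: "u \<in> Kset" using K_nonempty by blast
  obtain h :: "real^'d" where h: "h \<noteq> 0" using vector_choose_size[of 1] by (metis norm_zero zero_neq_one)
  have "0 \<le> Hf i u h \<bullet> h" using Hf_psd u KO by blast
  also have "\<dots> \<le> Li i * (norm h)\<^sup>2" using fi_hess_bound[OF u, where i=i and h=h] by (simp add: inner_commute)
  finally show ?thesis using h by (simp add: zero_le_mult_iff)
qed

lemma Li_le: "Li i \<le> Lmax"
  unfolding Lmax_def by (rule Max_ge) auto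

lemma Lmax_nonneg: "Lmax \<ge> 0"
  using Li_nonneg Li_le order_trans by blast

lemma gf_lip: "u \<in> Kset \<Longrightarrow> w \<in> Kset \<Longrightarrow> norm (gf i u - gf i w) \<le> Li i * norm (u - w)"
  by (rule differentiable_bound[OF K_convex])
     (auto intro: has_derivative_at_withinI f_hess KO onorm_le Hf_norm)

lemma gf_lip_max: "u \<in> Kset \<Longrightarrow> w \<in> Kset \<Longrightarrow> norm (gf i u - gf i w) \<le> Lmax * norm (u - w)"
  using gf_lip[where u=u and w=w and i=i] Li_le[of i] by (meson mult_right_mono norm_ge_zero order_trans)

end

lemma convex_on_sum_fun:
  assumes "finite A" "convex S" "\<And>i. i \<in> A \<Longrightarrow> convex_on S (f i)"
  shows "convex_on S (\<lambda>x. \<Sum>i\<in>A. f i x)"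
  using assms
proof (induction A rule: finite_induct)
  case empty thus ?case by (simp add: convex_on_const)
next
  case (insert j A)
  have "convex_on S (\<lambda>x. f j x + (\<Sum>i\<in>A. f i x))"
    using insert by (intro convex_on_add) auto
  thus ?case using insert by simp
qed

context sonata begin

lemma D_nonneg: "D i \<ge> 0" unfolding D_def by simp

lemma D_le: "D i \<le> Dmax" unfolding Dmax_def by (rule Max_ge) auto

lemma mut_ge: "\<mu>tmin \<le> \<mu>t i" unfolding mutmin_def by (rule Min_le) auto

lemma mutmin_pos: "\<mu>tmin > 0"
proof -
  have "\<mu>tmin \<in> range \<mu>t" unfolding mutmin_def by (rule Min_in) auto
  thus ?thesis using mut_pos by auto
qed

lemma Dl_ge: "Dlmin \<le> Dl i" unfolding Dlmin_def by (rule Min_le) auto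

lemma gh_norm:
  assumes u: "u \<in> Kset" and v: "v \<in> Kset"
  shows "norm (Hft i u v h - HF u h) \<le> D i * norm h"
proof (rule sym_bound[where B="\<lambda>h. Hft i u v h - HF u h"])
  show "linear (\<lambda>h. Hft i u v h - HF u h)"
    using Hft_lin[OF KO[OF u] KO[OF v], where i=i] HF_lin[OF KO[OF u]] by (rule linear_compose_sub)
  show "(Hft i u v a - HF u a) \<bullet> b = (Hft i u v b - HF u b) \<bullet> a" for a b
    using Hft_sym[OF KO[OF u] KO[OF v], where i=i and h=a and k=b] HF_sym[OF KO[OF u], where h=a and k=b] by (simp add: inner_diff_left)
  show "\<bar>w \<bullet> (Hft i u v w - HF u w)\<bar> \<le> D i * (norm w)\<^sup>2" for w
  proof -
    have b: "Dl i * (norm w)\<^sup>2 \<le> w \<bullet> (Hft i u v w - HF u w)" "w \<bullet> (Hft i u v w - HF u w) \<le> Du i * (norm w)\<^sup>2"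
      using ft_hess_bounds[OF u v, where i=i and h=w] by auto
    have "- (D i * (norm w)\<^sup>2) \<le> Dl i * (norm w)\<^sup>2"
    proof -
      have "- D i \<le> Dl i" unfolding D_def by simp
      hence "(- D i) * (norm w)\<^sup>2 \<le> Dl i * (norm w)\<^sup>2" by (rule mult_right_mono) simp
      thus ?thesis by simp
    qed
    moreover have "Du i * (norm w)\<^sup>2 \<le> D i * (norm w)\<^sup>2"
      unfolding D_def by (intro mult_right_mono) auto
    ultimately show ?thesis using b by (intro abs_leI) linarith+
  qed
qed

lemma gh_lip:
  assumes u: "u \<in> Kset" and w: "w \<in> Kset" and v: "v \<in> Kset"
  shows "norm ((gft i u v - gF u) - (gft i w v - gF w)) \<le> D i * norm (u - w)"
proof (rule differentiable_bound[OF K_convex, where f="\<lambda>u. gft i u v - gF u" and f'="\<lambda>u h. Hft i u v h - HF u h"])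
  show "((\<lambda>u. gft i u v - gF u) has_derivative (\<lambda>h. Hft i p v h - HF p h)) (at p within Kset)" if "p \<in> Kset" for p
    by (rule has_derivative_at_withinI[OF has_derivative_diff[OF ft_hess[OF KO[OF that] KO[OF v], where i=i] gF_deriv[OF KO[OF that]]]])
  show "onorm (\<lambda>h. Hft i p v h - HF p h) \<le> D i" if "p \<in> Kset" for p
    using gh_norm[OF that v] by (intro onorm_le) simp
qed (use u w in simp_all)

lemma F_strong:
  assumes u: "u \<in> Kset" and w: "w \<in> Kset"
  shows "F u \<ge> F w + gF w \<bullet> (u - w) + \<mu> / 2 * (norm (u - w))\<^sup>2"
proof (rule quad_lower[OF K_convex u w, where H=HF and \<phi>=F and g=gF and c=\<mu>])
  show "(F has_derivative (\<lambda>h. gF p \<bullet> h)) (at p)" if "p \<in> Kset" for p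
    using F_deriv[OF KO[OF that]] .
  show "(gF has_derivative HF p) (at p)" if "p \<in> Kset" for p
    using gF_deriv[OF KO[OF that]] .
  show "\<mu> * (norm (u - w))\<^sup>2 \<le> (u - w) \<bullet> HF p (u - w)" if "p \<in> Kset" for p
    using F_hess_bounds[OF that, where h="u - w"] by blast
qed

lemma h_lower:
  assumes u: "u \<in> Kset" and w: "w \<in> Kset" and v: "v \<in> Kset"
  shows "ft i u v - F u \<ge> (ft i w v - F w) + (gft i w v - gF w) \<bullet> (u - w) + Dl i / 2 * (norm (u - w))\<^sup>2"
proof (rule quad_lower[OF K_convex u w, where \<phi>="\<lambda>u. ft i u v - F u" and g="\<lambda>u. gft i u v - gF u"
      and H="\<lambda>p h. Hft i p v h - HF p h" and c="Dl i"])
  show "((\<lambda>u. ft i u v - F u) has_derivative (\<lambda>h. (gft i p v - gF p) \<bullet> h)) (at p)" if "p \<in> Kset" for p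
  proof -
    have "((\<lambda>u. ft i u v - F u) has_derivative (\<lambda>h. gft i p v \<bullet> h - gF p \<bullet> h)) (at p)"
      using ft_grad[OF KO[OF that] KO[OF v], where i=i] F_deriv[OF KO[OF that]] by (rule has_derivative_diff)
    thus ?thesis by (simp add: inner_diff_left)
  qed
  show "((\<lambda>u. gft i u v - gF u) has_derivative (\<lambda>h. Hft i p v h - HF p h)) (at p)" if "p \<in> Kset" for p
    using ft_hess[OF KO[OF that] KO[OF v], where i=i] gF_deriv[OF KO[OF that]] by (rule has_derivative_diff)
  show "Dl i * (norm (u - w))\<^sup>2 \<le> (u - w) \<bullet> (Hft i p v (u - w) - HF p (u - w))" if "p \<in> Kset" for p
    using ft_hess_bounds[OF that v] by blast
qed

lemma ft_tangent:
  assumes a: "q1 \<in> Kset" and b: "q2 \<in> Kset" and v: "v \<in> Kset"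
  shows "ft i q2 v \<ge> ft i q1 v + gft i q1 v \<bullet> (q2 - q1) + \<mu>t i / 2 * (norm (q2 - q1))\<^sup>2"
  by (rule strong_tangent[OF ft_strongly_convex[OF v] a b ft_grad[OF KO[OF a] KO[OF v]]])

lemma F_convex: "convex_on Kset F"
proof -
  have "convex_on Kset (\<lambda>u. \<Sum>i\<in>UNIV. f i u)"
    using convex_on_subset[OF f_convex K_sub_O K_convex] K_convex by (intro convex_on_sum_fun) simp_all
  hence "convex_on Kset (\<lambda>u. (1 / m) * (\<Sum>i\<in>UNIV. f i u))"
    using card_pos by (intro convex_on_cmul) auto
  thus ?thesis unfolding F_def .
qed

lemma U_convex: "convex_on Kset U"
  unfolding U_def using F_convex G_convex by (rule convex_on_add)

lemma Ustar_eq: "Ustar = U xstar" unfolding Ustar_def U_def by simp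

lemma xhat_VI:
  assumes u: "u \<in> Kset"
  shows "(gft i (xhat \<nu> i) (x \<nu> i) + y \<nu> i - gf i (x \<nu> i)) \<bullet> (u - xhat \<nu> i) \<ge> G (xhat \<nu> i) - G u"
proof -
  define xh where "xh = xhat \<nu> i"
  define xv where "xv = x \<nu> i"
  define c where "c = y \<nu> i - gf i (x \<nu> i)"
  have xh: "xh \<in> Kset" and xv: "xv \<in> Kset" unfolding xh_def xv_def using xhat_in x_in by auto
  define \<phi> where "\<phi> w = ft i w xv + c \<bullet> (w - xv)" for w
  have d\<phi>: "(\<phi> has_derivative (\<lambda>h. (gft i xh xv + c) \<bullet> h)) (at xh)"
  proof -
    have g1: "((\<lambda>w. ft i w xv) has_derivative (\<lambda>h. gft i xh xv \<bullet> h)) (at xh)"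
      using ft_grad[where u=xh and v=xv and i=i] xh xv KO by blast
    have g2: "((\<lambda>w. c \<bullet> (w - xv)) has_derivative (\<lambda>h. c \<bullet> h)) (at xh)"
      by (auto intro!: derivative_eq_intros)
    have "(\<phi> has_derivative (\<lambda>h. gft i xh xv \<bullet> h + c \<bullet> h)) (at xh)"
      unfolding \<phi>_def[abs_def] by (rule has_derivative_add[OF g1 g2])
    thus ?thesis by (simp add: inner_add_left)
  qed
  have "(\<lambda>h. (gft i xh xv + c) \<bullet> h) (u - xh) \<ge> G xh - G u"
  proof (rule deriv_dir_lower[OF d\<phi>])
    have "\<forall>\<^sub>F t in at_right (0::real). t < 1"
      using order_tendstoD(2)[OF tendsto_ident_at[of "0::real" "{0<..}"], of 1] by simp
    thus "\<forall>\<^sub>F t in at_right 0. \<phi> (xh + t *\<^sub>R (u - xh)) - \<phi> xh \<ge> t * (G xh - G u)"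
      using eventually_at_right_less[of 0]
    proof eventually_elim
      case (elim t)
      define pt where "pt = xh + t *\<^sub>R (u - xh)"
      have pt_eq: "pt = (1 - t) *\<^sub>R xh + t *\<^sub>R u" unfolding pt_def by (simp add: algebra_simps)
      have pt: "pt \<in> Kset" unfolding pt_eq using K_convex xh u elim by (simp add: convex_alt)
      have "\<phi> xh + G xh \<le> \<phi> pt + G pt"
        using xhat_min[OF pt, where \<nu>=\<nu> and i=i] unfolding \<phi>_def xh_def xv_def c_def by simp
      moreover have "G pt \<le> (1 - t) * G xh + t * G u"
        unfolding pt_eq using G_convex xh u elim unfolding convex_on_def by auto
      moreover have "(1 - t) * G xh + t * G u = G xh - t * (G xh - G u)" by (simp add: algebra_simps)
      ultimately show ?case unfolding pt_def by linarith
    qed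
  qed
  thus ?thesis unfolding xh_def xv_def c_def by (simp add: add_diff_eq)
qed

lemma xstar_VI:
  assumes u: "u \<in> Kset"
  shows "gF xstar \<bullet> (u - xstar) \<ge> G xstar - G u"
proof (rule deriv_dir_lower[OF F_deriv[OF KO[OF xstar_in]], where v="u - xstar", simplified])
  have "\<forall>\<^sub>F t in at_right (0::real). t < 1"
    using order_tendstoD(2)[OF tendsto_ident_at[of "0::real" "{0<..}"], of 1] by simp
  thus "\<forall>\<^sub>F t in at_right 0. F (xstar + t *\<^sub>R (u - xstar)) - F xstar \<ge> t * (G xstar - G u)"
    using eventually_at_right_less[of 0]
  proof eventually_elim
    case (elim t)
    define pt where "pt = xstar + t *\<^sub>R (u - xstar)"
    have pt_eq: "pt = (1 - t) *\<^sub>R xstar + t *\<^sub>R u" unfolding pt_def by (simp add: algebra_simps)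
    have pt: "pt \<in> Kset" unfolding pt_eq using K_convex xstar_in u elim by (simp add: convex_alt)
    have "F xstar + G xstar \<le> F pt + G pt"
      using xstar_min[OF pt] unfolding U_def by simp
    moreover have "G pt \<le> (1 - t) * G xstar + t * G u"
      unfolding pt_eq using G_convex xstar_in u elim unfolding convex_on_def by auto
    moreover have "(1 - t) * G xstar + t * G u = G xstar - t * (G xstar - G u)" by (simp add: algebra_simps)
    ultimately show ?case unfolding pt_def by linarith
  qed
qed

lemma U_growth:
  assumes u: "u \<in> Kset"
  shows "U u - Ustar \<ge> \<mu> / 2 * (norm (u - xstar))\<^sup>2"
proof -
  have "U u - Ustar = F u + G u - F xstar - G xstar" unfolding U_def Ustar_def by simp
  thus ?thesis using F_strong[OF u xstar_in] xstar_VI[OF u] by linarith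
qed

end

lemma ineq1_real:
  fixes t A0 A1 Ap Fp F0 Gp G0 Gh n P1 P2 P3 mu dl :: real
  assumes t: "0 \<le> t"
    and a: "Ap \<le> (1-t)*A0 + t*A1 - mu/2 * t*(1-t) * n"
    and b: "Ap - Fp \<ge> A0 - F0 + t*P1 + dl/2 * t\<^sup>2 * n"
    and c: "Gp \<le> (1-t)*G0 + t*Gh"
    and d: "-(P3+P2) \<ge> Gh - G0"
    and e: "A0 \<ge> A1 - P3 + mu/2 * n"
  shows "Fp + Gp \<le> F0 + G0 - t*(P1+P2) - t*((1-t/2)*mu + dl*t/2)*n"
proof -
  have d': "t*(Gh - G0) \<le> t*(-(P3+P2))" using mult_left_mono[OF d t] .
  have e': "t*(A1 - P3 + mu/2 * n) \<le> t*A0" using mult_left_mono[OF e t] .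
  show ?thesis using a b c d' e' by (simp add: algebra_simps power2_eq_square diff_divide_distrib add_divide_distrib)
qed

lemma combine_real:
  fixes DD a Vp V n e \<alpha> \<epsilon> \<mu> :: real
  assumes DD: "DD \<ge> 0" and a: "a > 0"
    and I1: "Vp \<le> V - \<alpha> * a * n + \<alpha> / (2 * \<epsilon>) * e"
    and I2: "Vp \<le> (1 - \<alpha>) * V + \<alpha> * DD * n + \<alpha> / \<mu> * e"
  shows "Vp \<le> (1 - \<alpha> * a / (DD + a)) * V + ((\<alpha> / (2 * \<epsilon>) * DD + \<alpha> / \<mu> * a) / (DD + a)) * e"
proof -
  have A: "DD + a > 0" using DD a by simp
  have "DD * Vp \<le> DD * (V - \<alpha> * a * n + \<alpha> / (2 * \<epsilon>) * e)" using mult_left_mono[OF I1 DD] .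
  moreover have "a * Vp \<le> a * ((1 - \<alpha>) * V + \<alpha> * DD * n + \<alpha> / \<mu> * e)" using mult_left_mono[OF I2] a by simp
  ultimately have "(DD + a) * Vp \<le> (DD + a - \<alpha> * a) * V + (\<alpha> / (2 * \<epsilon>) * DD + \<alpha> / \<mu> * a) * e"
    by (simp add: algebra_simps)
  also have "\<dots> = (DD + a) * ((1 - \<alpha> * a / (DD + a)) * V + ((\<alpha> / (2 * \<epsilon>) * DD + \<alpha> / \<mu> * a) / (DD + a)) * e)"
  proof -
    have e1: "(DD + a) * (1 - \<alpha> * a / (DD + a)) = DD + a - \<alpha> * a" using A by (simp add: right_diff_distrib)
    have e2: "(DD + a) * ((\<alpha> / (2 * \<epsilon>) * DD + \<alpha> / \<mu> * a) / (DD + a)) = \<alpha> / (2 * \<epsilon>) * DD + \<alpha> / \<mu> * a"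
      using A by simp
    show ?thesis by (simp only: distrib_left mult.assoc[symmetric] e1 e2)
  qed
  finally show ?thesis using A by (simp add: mult_le_cancel_left_pos)
qed

lemma sq_comb:
  fixes u w :: "'a::real_inner"
  shows "(1 - t) * (norm u)\<^sup>2 + t * (norm w)\<^sup>2 - (norm ((1 - t) *\<^sub>R u + t *\<^sub>R w))\<^sup>2 = t * (1 - t) * (norm (w - u))\<^sup>2"
  unfolding power2_norm_eq_inner
  by (simp add: inner_add_left inner_add_right inner_diff_left inner_diff_right inner_commute algebra_simps)

lemma young1:
  fixes s w :: "'a::real_inner"
  assumes e: "\<epsilon> > 0"
  shows "- (s \<bullet> w) \<le> (norm s)\<^sup>2 / (2 * \<epsilon>) + \<epsilon> / 2 * (norm w)\<^sup>2"
proof -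
  have "- (s \<bullet> w) \<le> norm s * norm w" using Cauchy_Schwarz_ineq2[of s w] by linarith
  also have "\<dots> \<le> (norm s)\<^sup>2 / (2 * \<epsilon>) + \<epsilon> / 2 * (norm w)\<^sup>2"
  proof -
    have "0 \<le> (norm s - \<epsilon> * norm w)\<^sup>2 / (2 * \<epsilon>)" using e by simp
    also have "\<dots> = (norm s)\<^sup>2 / (2 * \<epsilon>) + \<epsilon> / 2 * (norm w)\<^sup>2 - norm s * norm w"
      using e by (simp add: power2_eq_square field_simps)
    finally show ?thesis by simp
  qed
  finally show ?thesis .
qed

lemma young2:
  fixes q w :: "'a::real_inner"
  assumes mu: "\<mu> > 0"
  shows "q \<bullet> w - \<mu> / 2 * (norm w)\<^sup>2 \<le> (norm q)\<^sup>2 / (2 * \<mu>)"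
  using young1[OF mu, of q "-w"] by simp

lemma sq_sum2: fixes A B :: real shows "(A + B)\<^sup>2 \<le> 2 * A\<^sup>2 + 2 * B\<^sup>2"
proof -
  have "0 \<le> (A - B)\<^sup>2" by simp
  thus ?thesis by (simp add: power2_eq_square algebra_simps)
qed

lemma norm_sum2: fixes u w :: "'a::real_normed_vector" shows "(norm (u + w))\<^sup>2 \<le> 2 * (norm u)\<^sup>2 + 2 * (norm w)\<^sup>2"
proof -
  have "(norm (u + w))\<^sup>2 \<le> (norm u + norm w)\<^sup>2" by (intro power_mono norm_triangle_ineq) simp
  also have "\<dots> \<le> 2 * (norm u)\<^sup>2 + 2 * (norm w)\<^sup>2" by (rule sq_sum2)
  finally show ?thesis .
qed

context sonata begin

lemma ineq1:
  "U (x \<nu> i + \<alpha> *\<^sub>R d \<nu> i) \<le> U (x \<nu> i) - \<alpha> * a * (norm (d \<nu> i))\<^sup>2 + \<alpha> / (2 * \<epsilon>opt) * (norm (y \<nu> i - gF (x \<nu> i)))\<^sup>2"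
proof -
  define xv where "xv = x \<nu> i"
  define xh where "xh = xhat \<nu> i"
  define yv where "yv = y \<nu> i"
  define dd where "dd = d \<nu> i"
  define pt where "pt = xv + \<alpha> *\<^sub>R dd"
  have xv: "xv \<in> Kset" and xh: "xh \<in> Kset" unfolding xv_def xh_def using x_in xhat_in by auto
  have dd: "dd = xh - xv" unfolding dd_def xh_def xv_def d_eq ..
  have pt_eq: "pt = (1 - \<alpha>) *\<^sub>R xv + \<alpha> *\<^sub>R xh" unfolding pt_def dd by (simp add: algebra_simps)
  have pt: "pt \<in> Kset" unfolding pt_def xv_def dd_def by (rule step_in)
  have t: "0 \<le> \<alpha>" "\<alpha> \<le> 1" using alpha_range by auto
  define n where "n = (norm dd)\<^sup>2"
  define P1 where "P1 = (gf i xv - gF xv) \<bullet> dd"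
  define P2 where "P2 = (yv - gf i xv) \<bullet> dd"
  define P3 where "P3 = gft i xh xv \<bullet> dd"
  have A: "ft i pt xv \<le> (1-\<alpha>) * ft i xv xv + \<alpha> * ft i xh xv - \<mu>t i / 2 * \<alpha> * (1-\<alpha>) * n"
  proof -
    have cv: "convex_on Kset (\<lambda>w. ft i w xv - (\<mu>t i / 2) * (norm w)\<^sup>2)"
      using ft_strongly_convex[OF xv] unfolding strongly_convex_on_def .
    have "ft i pt xv - (\<mu>t i / 2) * (norm pt)\<^sup>2 \<le> (1-\<alpha>) * (ft i xv xv - (\<mu>t i / 2) * (norm xv)\<^sup>2) + \<alpha> * (ft i xh xv - (\<mu>t i / 2) * (norm xh)\<^sup>2)"
      using cv xv xh t unfolding convex_on_def pt_eq by auto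
    moreover have "(1 - \<alpha>) * (norm xv)\<^sup>2 + \<alpha> * (norm xh)\<^sup>2 - (norm pt)\<^sup>2 = \<alpha> * (1 - \<alpha>) * n"
      unfolding pt_eq n_def dd by (rule sq_comb)
    hence "\<mu>t i / 2 * ((1 - \<alpha>) * (norm xv)\<^sup>2 + \<alpha> * (norm xh)\<^sup>2 - (norm pt)\<^sup>2) = \<mu>t i / 2 * (\<alpha> * (1 - \<alpha>) * n)" by simp
    ultimately show ?thesis by (simp add: algebra_simps diff_divide_distrib add_divide_distrib)
  qed
  have B: "ft i pt xv - F pt \<ge> ft i xv xv - F xv + \<alpha> * P1 + Dl i / 2 * \<alpha>\<^sup>2 * n"
  proof -
    have "ft i pt xv - F pt \<ge> (ft i xv xv - F xv) + (gft i xv xv - gF xv) \<bullet> (pt - xv) + Dl i / 2 * (norm (pt - xv))\<^sup>2"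
      by (rule h_lower[OF pt xv xv])
    moreover have "gft i xv xv = gf i xv" using ft_consistent KO[OF xv] by blast
    moreover have "pt - xv = \<alpha> *\<^sub>R dd" unfolding pt_def by simp
    ultimately show ?thesis unfolding P1_def n_def by (simp add: power_mult_distrib)
  qed
  have C: "G pt \<le> (1 - \<alpha>) * G xv + \<alpha> * G xh"
    using G_convex xv xh t unfolding convex_on_def pt_eq by auto
  have Dd: "-(P3 + P2) \<ge> G xh - G xv"
  proof -
    have "(gft i xh xv + yv - gf i xv) \<bullet> (xv - xh) \<ge> G xh - G xv"
      using xhat_VI[OF xv, where \<nu>=\<nu> and i=i] unfolding xh_def xv_def yv_def .
    moreover have "xv - xh = - dd" unfolding dd by simp
    ultimately show ?thesis unfolding P2_def P3_def by (simp add: inner_add_left inner_diff_left)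
  qed
  have Ee: "ft i xv xv \<ge> ft i xh xv - P3 + \<mu>t i / 2 * n"
  proof -
    have "ft i xv xv \<ge> ft i xh xv + gft i xh xv \<bullet> (xv - xh) + \<mu>t i / 2 * (norm (xv - xh))\<^sup>2"
      by (rule ft_tangent[OF xh xv xv])
    moreover have "xv - xh = - dd" unfolding dd by simp
    ultimately show ?thesis unfolding P3_def n_def by simp
  qed
  have main: "F pt + G pt \<le> F xv + G xv - \<alpha>*(P1+P2) - \<alpha>*((1-\<alpha>/2)*\<mu>t i + Dl i*\<alpha>/2)*n"
    by (rule ineq1_real[OF t(1) A B C Dd Ee])
  have S: "P1 + P2 = (yv - gF xv) \<bullet> dd" unfolding P1_def P2_def by (simp add: inner_diff_left)
  have Y: "-(P1 + P2) \<le> (norm (yv - gF xv))\<^sup>2 / (2 * \<epsilon>opt) + \<epsilon>opt / 2 * n"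
    unfolding S n_def by (rule young1[OF eps_opt_pos])
  have Y': "-\<alpha>*(P1 + P2) \<le> \<alpha> * ((norm (yv - gF xv))\<^sup>2 / (2 * \<epsilon>opt) + \<epsilon>opt / 2 * n)"
    using mult_left_mono[OF Y t(1)] by (simp add: algebra_simps)
  have ai: "a \<le> (1-\<alpha>/2)*\<mu>t i + Dl i*\<alpha>/2 - \<epsilon>opt/2"
  proof -
    have "(1-\<alpha>/2)*\<mu>tmin \<le> (1-\<alpha>/2)*\<mu>t i" using mut_ge[of i] t by (intro mult_left_mono) auto
    moreover have "Dlmin*\<alpha>/2 \<le> Dl i*\<alpha>/2" using Dl_ge[of i] t by (simp add: divide_right_mono mult_right_mono)
    ultimately show ?thesis unfolding a_def by (simp add: algebra_simps)
  qed
  have n0: "n \<ge> 0" unfolding n_def by simp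
  have ai': "\<alpha> * a * n \<le> \<alpha> * ((1-\<alpha>/2)*\<mu>t i + Dl i*\<alpha>/2 - \<epsilon>opt/2) * n"
    using ai t n0 by (intro mult_right_mono mult_left_mono) auto
  have "U pt \<le> U xv - \<alpha> * a * n + \<alpha> / (2 * \<epsilon>opt) * (norm (yv - gF xv))\<^sup>2"
    using main Y' ai' unfolding U_def by (simp add: algebra_simps)
  thus ?thesis unfolding pt_def xv_def dd_def yv_def n_def .
qed

end

context sonata begin

lemma ineq2:
  "U (x \<nu> i + \<alpha> *\<^sub>R d \<nu> i) - Ustar \<le> (1 - \<alpha>) * (U (x \<nu> i) - Ustar)
     + \<alpha> * (Dmax\<^sup>2 / \<mu>) * (norm (d \<nu> i))\<^sup>2 + \<alpha> / \<mu> * (norm (y \<nu> i - gF (x \<nu> i)))\<^sup>2"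
proof -
  define xv where "xv = x \<nu> i"
  define xh where "xh = xhat \<nu> i"
  define yv where "yv = y \<nu> i"
  define dd where "dd = d \<nu> i"
  define pt where "pt = xv + \<alpha> *\<^sub>R dd"
  define s where "s = yv - gF xv"
  define n where "n = (norm dd)\<^sup>2"
  have xv: "xv \<in> Kset" and xh: "xh \<in> Kset" unfolding xv_def xh_def using x_in xhat_in by auto
  have dd: "dd = xh - xv" unfolding dd_def xh_def xv_def d_eq ..
  have pt_eq: "pt = (1 - \<alpha>) *\<^sub>R xv + \<alpha> *\<^sub>R xh" unfolding pt_def dd by (simp add: algebra_simps)
  have t: "0 \<le> \<alpha>" "\<alpha> \<le> 1" using alpha_range by auto
  have conv: "U pt \<le> (1 - \<alpha>) * U xv + \<alpha> * U xh"
    using U_convex xv xh t unfolding convex_on_def pt_eq by auto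
  have H: "U xh - Ustar \<le> (Dmax\<^sup>2 * n + (norm s)\<^sup>2) / \<mu>"
  proof -
    define w where "w = xstar - xh"
    define q where "q = (gft i xh xv + yv - gf i xv) - gF xh"
    have Fs: "F xstar \<ge> F xh + gF xh \<bullet> w + \<mu> / 2 * (norm w)\<^sup>2"
      unfolding w_def by (rule F_strong[OF xstar_in xh])
    have VI: "(gft i xh xv + yv - gf i xv) \<bullet> w \<ge> G xh - G xstar"
      unfolding w_def xh_def xv_def yv_def by (rule xhat_VI[OF xstar_in])
    have qw: "q \<bullet> w = (gft i xh xv + yv - gf i xv) \<bullet> w - gF xh \<bullet> w" unfolding q_def by (simp add: inner_diff_left)
    have "U xh - Ustar \<le> q \<bullet> w - \<mu> / 2 * (norm w)\<^sup>2"
      using Fs VI qw unfolding U_def Ustar_def by linarith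
    also have "\<dots> \<le> (norm q)\<^sup>2 / (2 * \<mu>)" by (rule young2[OF mu_pos])
    also have "\<dots> \<le> (Dmax\<^sup>2 * n + (norm s)\<^sup>2) / \<mu>"
    proof -
      have cons: "gft i xv xv = gf i xv" using ft_consistent KO[OF xv] by blast
      have qeq: "q = ((gft i xh xv - gF xh) - (gft i xv xv - gF xv)) + s"
        unfolding q_def s_def cons by (simp add: algebra_simps)
      have "norm q \<le> norm ((gft i xh xv - gF xh) - (gft i xv xv - gF xv)) + norm s"
        unfolding qeq by (rule norm_triangle_ineq)
      also have "\<dots> \<le> D i * norm dd + norm s"
        using gh_lip[OF xh xv xv, where i=i] unfolding dd by simp
      finally have nq: "norm q \<le> D i * norm dd + norm s" .
      have "(norm q)\<^sup>2 \<le> (D i * norm dd + norm s)\<^sup>2" using nq by (intro power_mono) auto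
      also have "\<dots> \<le> 2 * (D i * norm dd)\<^sup>2 + 2 * (norm s)\<^sup>2" by (rule sq_sum2)
      also have "\<dots> \<le> 2 * (Dmax\<^sup>2 * n) + 2 * (norm s)\<^sup>2"
      proof -
        have "(D i)\<^sup>2 \<le> Dmax\<^sup>2" using D_nonneg[of i] D_le[of i] by (intro power_mono) auto
        hence "(D i)\<^sup>2 * n \<le> Dmax\<^sup>2 * n" unfolding n_def by (intro mult_right_mono) auto
        thus ?thesis unfolding n_def by (simp add: power_mult_distrib)
      qed
      finally have "(norm q)\<^sup>2 \<le> 2 * (Dmax\<^sup>2 * n + (norm s)\<^sup>2)" by simp
      thus ?thesis using mu_pos by (simp add: divide_simps)
    qed
    finally show ?thesis .
  qed
  have "U pt - Ustar \<le> (1 - \<alpha>) * (U xv - Ustar) + \<alpha> * (U xh - Ustar)"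
    using conv by (simp add: algebra_simps)
  also have "\<dots> \<le> (1 - \<alpha>) * (U xv - Ustar) + \<alpha> * ((Dmax\<^sup>2 * n + (norm s)\<^sup>2) / \<mu>)"
    using H t by (intro add_left_mono mult_left_mono) auto
  also have "\<dots> = (1 - \<alpha>) * (U xv - Ustar) + \<alpha> * (Dmax\<^sup>2 / \<mu>) * n + \<alpha> / \<mu> * (norm s)\<^sup>2"
    by (simp add: add_divide_distrib algebra_simps)
  finally show ?thesis unfolding pt_def xv_def dd_def n_def s_def yv_def .
qed

lemma a_pos': "a > 0" using a_pos .

lemma agent_step:
  "U (x \<nu> i + \<alpha> *\<^sub>R d \<nu> i) - Ustar \<le> \<sigma> * (U (x \<nu> i) - Ustar) + \<eta> * (norm (y \<nu> i - gF (x \<nu> i)))\<^sup>2"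
proof -
  have DD: "Dmax\<^sup>2 / \<mu> \<ge> 0" using mu_pos by simp
  have I1: "U (x \<nu> i + \<alpha> *\<^sub>R d \<nu> i) - Ustar \<le> (U (x \<nu> i) - Ustar) - \<alpha> * a * (norm (d \<nu> i))\<^sup>2
      + \<alpha> / (2 * \<epsilon>opt) * (norm (y \<nu> i - gF (x \<nu> i)))\<^sup>2"
    using ineq1[of \<nu> i] by simp
  have I2: "U (x \<nu> i + \<alpha> *\<^sub>R d \<nu> i) - Ustar \<le> (1 - \<alpha>) * (U (x \<nu> i) - Ustar)
      + \<alpha> * (Dmax\<^sup>2 / \<mu>) * (norm (d \<nu> i))\<^sup>2 + \<alpha> / \<mu> * (norm (y \<nu> i - gF (x \<nu> i)))\<^sup>2"
    by (rule ineq2)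
  show ?thesis unfolding sigma_def eta_def by (rule combine_real[OF DD a_pos I1 I2])
qed

lemma p_step:
  "p (Suc \<nu>) \<le> \<sigma> * p \<nu> + \<eta> * (\<Sum>i\<in>UNIV. (norm (y \<nu> i - gF (x \<nu> i)))\<^sup>2)"
proof -
  define w where "w j = x \<nu> j + \<alpha> *\<^sub>R d \<nu> j" for j
  have U1: "U (x (Suc \<nu>) i) \<le> (\<Sum>j\<in>UNIV. W i j * U (w j))" for i
    unfolding x_update w_def
    by (rule convex_on_sum[OF _ _ U_convex]) (use W_rows W_nonneg step_in in auto)
  have "p (Suc \<nu>) = (\<Sum>i\<in>UNIV. U (x (Suc \<nu>) i) - Ustar)" unfolding p_def ..
  also have "\<dots> \<le> (\<Sum>i\<in>UNIV. (\<Sum>j\<in>UNIV. W i j * U (w j)) - Ustar)"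
    using U1 by (intro sum_mono) (simp add: algebra_simps)
  also have "\<dots> = (\<Sum>i\<in>UNIV. \<Sum>j\<in>UNIV. W i j * (U (w j) - Ustar))"
  proof (intro sum.cong refl)
    fix i
    have "(\<Sum>j\<in>UNIV. W i j * (U (w j) - Ustar)) = (\<Sum>j\<in>UNIV. W i j * U (w j)) - (\<Sum>j\<in>UNIV. W i j) * Ustar"
      by (simp add: right_diff_distrib sum_subtractf sum_distrib_right)
    thus "(\<Sum>j\<in>UNIV. W i j * U (w j)) - Ustar = (\<Sum>j\<in>UNIV. W i j * (U (w j) - Ustar))"
      using W_rows[of i] by simp
  qed
  also have "\<dots> = (\<Sum>j\<in>UNIV. (\<Sum>i\<in>UNIV. W i j) * (U (w j) - Ustar))"
    by (subst sum.swap) (simp add: sum_distrib_right)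
  also have "\<dots> = (\<Sum>j\<in>UNIV. U (w j) - Ustar)" using W_cols by simp
  also have "\<dots> \<le> (\<Sum>j\<in>UNIV. \<sigma> * (U (x \<nu> j) - Ustar) + \<eta> * (norm (y \<nu> j - gF (x \<nu> j)))\<^sup>2)"
    unfolding w_def by (intro sum_mono agent_step)
  also have "\<dots> = \<sigma> * p \<nu> + \<eta> * (\<Sum>i\<in>UNIV. (norm (y \<nu> i - gF (x \<nu> i)))\<^sup>2)"
    unfolding p_def by (simp add: sum.distrib sum_distrib_left)
  finally show ?thesis .
qed

lemma track: "(\<Sum>i\<in>UNIV. y \<nu> i) = (\<Sum>i\<in>UNIV. gf i (x \<nu> i))"
proof (induction \<nu>)
  case 0 thus ?case using y0 by simp
next
  case (Suc \<nu>)
  have "(\<Sum>i\<in>UNIV. y (Suc \<nu>) i) = (\<Sum>i\<in>UNIV. \<Sum>j\<in>UNIV. W i j *\<^sub>R (y \<nu> j + gf j (x (Suc \<nu>) j) - gf j (x \<nu> j)))"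
    unfolding y_update ..
  also have "\<dots> = (\<Sum>j\<in>UNIV. (\<Sum>i\<in>UNIV. W i j) *\<^sub>R (y \<nu> j + gf j (x (Suc \<nu>) j) - gf j (x \<nu> j)))"
    by (subst sum.swap) (simp add: scaleR_sum_left)
  also have "\<dots> = (\<Sum>j\<in>UNIV. y \<nu> j + gf j (x (Suc \<nu>) j) - gf j (x \<nu> j))" using W_cols by simp
  also have "\<dots> = (\<Sum>j\<in>UNIV. y \<nu> j) + (\<Sum>j\<in>UNIV. gf j (x (Suc \<nu>) j)) - (\<Sum>j\<in>UNIV. gf j (x \<nu> j))"
    by (simp add: sum.distrib sum_subtractf)
  finally show ?case using Suc.IH by simp
qed

end

definition mean :: "('i::finite \<Rightarrow> 'a::real_vector) \<Rightarrow> 'a" where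
  "mean v = (1 / real CARD('i)) *\<^sub>R (\<Sum>j\<in>UNIV. v j)"

lemma perp_sq_stack: "perp_sq v = stack_sq (\<lambda>i. v i - mean v)"
  unfolding perp_sq_def stack_sq_def mean_def ..

lemma perp_nonneg: "perp_sq v \<ge> 0"
  unfolding perp_sq_stack by (rule stack_sq_nonneg)

lemma sum_centered: fixes v :: "'i::finite \<Rightarrow> 'a::real_vector" shows "(\<Sum>i\<in>UNIV. v i - mean v) = 0"
proof -
  have "(\<Sum>i\<in>(UNIV::'i set). mean v) = real CARD('i) *\<^sub>R mean v" by (simp only: sum_constant_scaleR card_UNIV)
  also have "\<dots> = (\<Sum>j\<in>UNIV. v j)" unfolding mean_def by simp
  finally show ?thesis by (simp add: sum_subtractf)
qed

lemma pair_sum: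
  fixes v :: "'i::finite \<Rightarrow> 'a::real_inner"
  shows "(\<Sum>i\<in>UNIV. \<Sum>j\<in>UNIV. (norm (v j - v i))\<^sup>2) = 2 * real CARD('i) * perp_sq v"
proof -
  define c where "c = mean v"
  define a where "a k = v k - c" for k
  have sa: "(\<Sum>k\<in>UNIV. a k) = 0" unfolding a_def c_def by (rule sum_centered)
  have e: "(norm (v j - v i))\<^sup>2 = (norm (a j))\<^sup>2 - 2 * (a j \<bullet> a i) + (norm (a i))\<^sup>2" for i j
  proof -
    have "v j - v i = a j - a i" unfolding a_def by simp
    thus ?thesis by (simp add: power2_norm_eq_inner inner_diff_left inner_diff_right inner_commute)
  qed
  have z: "(\<Sum>j\<in>UNIV. a j \<bullet> a i) = 0" for i
    using sa by (simp add: inner_sum_left[symmetric])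
  have "(\<Sum>i\<in>UNIV. \<Sum>j\<in>UNIV. (norm (v j - v i))\<^sup>2)
      = (\<Sum>i\<in>UNIV. (\<Sum>j\<in>UNIV. (norm (a j))\<^sup>2) - 2 * (\<Sum>j\<in>UNIV. a j \<bullet> a i) + real CARD('i) * (norm (a i))\<^sup>2)"
    unfolding e by (simp add: sum.distrib sum_subtractf sum_distrib_left)
  also have "\<dots> = (\<Sum>i\<in>UNIV. (\<Sum>j\<in>UNIV. (norm (a j))\<^sup>2) + real CARD('i) * (norm (a i))\<^sup>2)"
    using z by simp
  also have "\<dots> = 2 * real CARD('i) * (\<Sum>j\<in>UNIV. (norm (a j))\<^sup>2)"
    by (simp add: sum.distrib sum_distrib_left[symmetric])
  also have "(\<Sum>j\<in>UNIV. (norm (a j))\<^sup>2) = perp_sq v"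
    unfolding perp_sq_def a_def c_def mean_def ..
  finally show ?thesis .
qed

lemma perp_le_stack: "perp_sq (v :: 'i::finite \<Rightarrow> 'a::real_inner) \<le> stack_sq v"
proof -
  define c where "c = mean v"
  have sv: "(\<Sum>j\<in>UNIV. v j) = real CARD('i) *\<^sub>R c" unfolding c_def mean_def by simp
  have "perp_sq v = (\<Sum>i\<in>UNIV. (norm (v i))\<^sup>2 - 2 * (v i \<bullet> c) + (norm c)\<^sup>2)"
    unfolding perp_sq_def c_def[symmetric, unfolded mean_def]
    by (intro sum.cong refl) (simp add: power2_norm_eq_inner inner_diff_left inner_diff_right inner_commute)
  also have "\<dots> = stack_sq v - 2 * ((\<Sum>j\<in>UNIV. v j) \<bullet> c) + real CARD('i) * (norm c)\<^sup>2"
    unfolding stack_sq_def by (simp add: sum.distrib sum_subtractf sum_distrib_left inner_sum_left)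
  also have "\<dots> = stack_sq v - real CARD('i) * (norm c)\<^sup>2"
    unfolding sv by (simp add: power2_norm_eq_inner)
  finally show ?thesis by simp
qed

lemma mean_add: "mean (\<lambda>i. a i + b i) = mean a + mean b"
  unfolding mean_def by (simp add: sum.distrib scaleR_add_right)

lemma mean_scale: "mean (\<lambda>i. c *\<^sub>R a i) = c *\<^sub>R mean a"
  unfolding mean_def by (simp add: scaleR_sum_right)

lemma perp_tri:
  fixes a b :: "'i::finite \<Rightarrow> real^'d::finite"
  shows "sqrt (perp_sq (\<lambda>i. a i + b i)) \<le> sqrt (perp_sq a) + sqrt (perp_sq b)"
proof -
  have "(\<lambda>i. a i + b i - mean (\<lambda>i. a i + b i)) = (\<lambda>i. (a i - mean a) + (b i - mean b))"
    unfolding mean_add by (simp add: algebra_simps)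
  thus ?thesis unfolding perp_sq_stack using stack_tri[of "\<lambda>i. a i - mean a" "\<lambda>i. b i - mean b"] by simp
qed

lemma perp_scale: "perp_sq (\<lambda>i. c *\<^sub>R a i) = c\<^sup>2 * perp_sq (a :: 'i::finite \<Rightarrow> 'a::real_inner)"
proof -
  have "(\<lambda>i. c *\<^sub>R a i - mean (\<lambda>i. c *\<^sub>R a i)) = (\<lambda>i. c *\<^sub>R (a i - mean a))"
    unfolding mean_scale by (simp add: scaleR_diff_right)
  thus ?thesis unfolding perp_sq_stack by (simp add: stack_scale)
qed

lemma sqrt_sq_le:
  fixes A B X :: real
  assumes "0 \<le> A" "0 \<le> B" "sqrt X \<le> A + B" "0 \<le> X"
  shows "X \<le> (A + B)\<^sup>2"
  using assms by (metis real_sqrt_le_iff real_sqrt_pow2 power_mono real_sqrt_ge_zero)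

context sonata begin

lemma perp_W:
  fixes w :: "'i \<Rightarrow> real^'d"
  shows "perp_sq (\<lambda>i. \<Sum>j\<in>UNIV. W i j *\<^sub>R w j) \<le> \<rho>\<^sup>2 * perp_sq w"
proof -
  define n where "n = real CARD('i)"
  have n: "n > 0" unfolding n_def by simp
  define wb where "wb = mean w"
  define u where "u i = (\<Sum>j\<in>UNIV. W i j *\<^sub>R w j)" for i
  have ub: "mean u = wb"
  proof -
    have "(\<Sum>i\<in>UNIV. u i) = (\<Sum>j\<in>UNIV. (\<Sum>i\<in>UNIV. W i j) *\<^sub>R w j)"
      unfolding u_def by (subst sum.swap) (simp add: scaleR_sum_left)
    also have "\<dots> = (\<Sum>j\<in>UNIV. w j)" using W_cols by simp
    finally show ?thesis unfolding mean_def wb_def by simp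
  qed
  have cen: "u i - mean u = (\<Sum>j\<in>UNIV. (W i j - 1 / n) *\<^sub>R (w j - wb))" for i
  proof -
    have s1: "(\<Sum>j\<in>UNIV. W i j *\<^sub>R wb) = wb" using W_rows[of i] by (simp add: scaleR_sum_left[symmetric])
    have s2: "(\<Sum>j\<in>UNIV. (1 / n) *\<^sub>R w j) = wb" unfolding wb_def mean_def n_def by (simp add: scaleR_sum_right)
    have s3: "(\<Sum>j\<in>(UNIV::'i set). (1 / n) *\<^sub>R wb) = wb" using n unfolding n_def by (simp only: sum_constant_scaleR) simp
    have "(\<Sum>j\<in>UNIV. (W i j - 1 / n) *\<^sub>R (w j - wb))
        = (\<Sum>j\<in>UNIV. W i j *\<^sub>R w j) - (\<Sum>j\<in>UNIV. W i j *\<^sub>R wb) - (\<Sum>j\<in>UNIV. (1 / n) *\<^sub>R w j) + (\<Sum>j\<in>(UNIV::'i set). (1 / n) *\<^sub>R wb)"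
      by (simp add: scaleR_diff_left scaleR_diff_right sum_subtractf sum.distrib algebra_simps)
    also have "\<dots> = u i - wb" unfolding s1 s2 s3 u_def by simp
    finally show ?thesis using ub by simp
  qed
  have "perp_sq u = stack_sq (\<lambda>i. \<Sum>j\<in>UNIV. (W i j - 1 / n) *\<^sub>R (w j - wb))"
    unfolding perp_sq_stack cen ..
  also have "\<dots> \<le> \<rho>\<^sup>2 * stack_sq (\<lambda>j. w j - wb)"
    unfolding rho_def n_def by (rule rho_bound)
  also have "stack_sq (\<lambda>j. w j - wb) = perp_sq w" unfolding perp_sq_stack wb_def ..
  finally show ?thesis unfolding u_def .
qed

lemma rho_nn: "\<rho> \<ge> 0" unfolding rho_def by (rule rho_nonneg)

lemma X_step:
  "perp_sq (x (Suc \<nu>)) \<le> \<rho>\<^sup>2 * (1 + \<epsilon>x) * perp_sq (x \<nu>) + \<rho>\<^sup>2 * (1 + 1 / \<epsilon>x) * \<alpha>\<^sup>2 * stack_sq (d \<nu>)"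
proof -
  define X where "X = perp_sq (x \<nu>)"
  define DD where "DD = stack_sq (d \<nu>)"
  have X0: "X \<ge> 0" unfolding X_def by (rule perp_nonneg)
  have D0: "DD \<ge> 0" unfolding DD_def by (rule stack_sq_nonneg)
  have t: "0 \<le> \<alpha>" using alpha_range by auto
  have xs: "x (Suc \<nu>) = (\<lambda>i. \<Sum>j\<in>UNIV. W i j *\<^sub>R (x \<nu> j + \<alpha> *\<^sub>R d \<nu> j))"
    using x_update by (simp add: fun_eq_iff)
  have "sqrt (perp_sq (\<lambda>j. x \<nu> j + \<alpha> *\<^sub>R d \<nu> j)) \<le> sqrt (perp_sq (x \<nu>)) + sqrt (perp_sq (\<lambda>j. \<alpha> *\<^sub>R d \<nu> j))"
    using perp_tri[of "x \<nu>" "\<lambda>j. \<alpha> *\<^sub>R d \<nu> j"] by simp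
  also have "sqrt (perp_sq (\<lambda>j. \<alpha> *\<^sub>R d \<nu> j)) \<le> \<alpha> * sqrt DD"
  proof -
    have "perp_sq (\<lambda>j. \<alpha> *\<^sub>R d \<nu> j) \<le> \<alpha>\<^sup>2 * DD"
      unfolding perp_scale DD_def using perp_le_stack[of "d \<nu>"] by (intro mult_left_mono) auto
    hence "sqrt (perp_sq (\<lambda>j. \<alpha> *\<^sub>R d \<nu> j)) \<le> sqrt (\<alpha>\<^sup>2 * DD)" by (rule real_sqrt_le_mono)
    thus ?thesis using t by (simp add: real_sqrt_mult)
  qed
  finally have "sqrt (perp_sq (\<lambda>j. x \<nu> j + \<alpha> *\<^sub>R d \<nu> j)) \<le> sqrt X + \<alpha> * sqrt DD"
    unfolding X_def by simp
  hence "perp_sq (\<lambda>j. x \<nu> j + \<alpha> *\<^sub>R d \<nu> j) \<le> (sqrt X + \<alpha> * sqrt DD)\<^sup>2"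
    using t X0 D0 perp_nonneg by (intro sqrt_sq_le) auto
  also have "\<dots> \<le> (1 + \<epsilon>x) * (sqrt X)\<^sup>2 + (1 + 1 / \<epsilon>x) * (\<alpha> * sqrt DD)\<^sup>2"
    using t X0 D0 eps_x_pos by (intro sq_split) auto
  also have "\<dots> = (1 + \<epsilon>x) * X + (1 + 1 / \<epsilon>x) * \<alpha>\<^sup>2 * DD"
    using X0 D0 by (simp add: power_mult_distrib)
  finally have w: "perp_sq (\<lambda>j. x \<nu> j + \<alpha> *\<^sub>R d \<nu> j) \<le> (1 + \<epsilon>x) * X + (1 + 1 / \<epsilon>x) * \<alpha>\<^sup>2 * DD" .
  have "perp_sq (x (Suc \<nu>)) \<le> \<rho>\<^sup>2 * perp_sq (\<lambda>j. x \<nu> j + \<alpha> *\<^sub>R d \<nu> j)"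
    unfolding xs by (rule perp_W)
  also have "\<dots> \<le> \<rho>\<^sup>2 * ((1 + \<epsilon>x) * X + (1 + 1 / \<epsilon>x) * \<alpha>\<^sup>2 * DD)"
    using w by (intro mult_left_mono) auto
  finally show ?thesis unfolding X_def DD_def by (simp add: algebra_simps)
qed

end

context sonata begin

lemma SX_bound:
  "stack_sq (\<lambda>j. x (Suc \<nu>) j - x \<nu> j) \<le> 8 * perp_sq (x \<nu>) + 2 * \<alpha>\<^sup>2 * stack_sq (d \<nu>)"
proof -
  define xb where "xb = mean (x \<nu>)"
  define A where "A j = (\<Sum>k\<in>UNIV. W j k *\<^sub>R (x \<nu> k - xb))" for j
  define B where "B j = - (x \<nu> j - xb)" for j
  define C where "C j = \<alpha> *\<^sub>R (\<Sum>k\<in>UNIV. W j k *\<^sub>R d \<nu> k)" for j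
  define X where "X = perp_sq (x \<nu>)"
  define DD where "DD = stack_sq (d \<nu>)"
  have X0: "X \<ge> 0" unfolding X_def by (rule perp_nonneg)
  have D0: "DD \<ge> 0" unfolding DD_def by (rule stack_sq_nonneg)
  have t: "0 \<le> \<alpha>" using alpha_range by auto
  have eq: "x (Suc \<nu>) j - x \<nu> j = (A j + B j) + C j" for j
  proof -
    have "x (Suc \<nu>) j = (\<Sum>k\<in>UNIV. W j k *\<^sub>R (x \<nu> k - xb)) + (\<Sum>k\<in>UNIV. W j k) *\<^sub>R xb + \<alpha> *\<^sub>R (\<Sum>k\<in>UNIV. W j k *\<^sub>R d \<nu> k)"
      unfolding x_update
      by (simp add: scaleR_add_right scaleR_diff_right sum.distrib sum_subtractf scaleR_sum_left scaleR_sum_right algebra_simps)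
    thus ?thesis unfolding A_def B_def C_def using W_rows[of j] by simp
  qed
  have sA: "stack_sq A \<le> X"
    unfolding A_def X_def perp_sq_stack xb_def by (rule stack_W[OF W_nonneg W_rows W_cols])
  have sB: "stack_sq B = X" unfolding B_def X_def perp_sq_stack xb_def stack_sq_def by (simp add: norm_minus_commute)
  have sC: "stack_sq C \<le> \<alpha>\<^sup>2 * DD"
  proof -
    have "stack_sq C = \<alpha>\<^sup>2 * stack_sq (\<lambda>j. \<Sum>k\<in>UNIV. W j k *\<^sub>R d \<nu> k)" unfolding C_def by (rule stack_scale)
    also have "\<dots> \<le> \<alpha>\<^sup>2 * DD" unfolding DD_def by (intro mult_left_mono stack_W[OF W_nonneg W_rows W_cols]) auto
    finally show ?thesis .
  qed
  have "sqrt (stack_sq (\<lambda>j. x (Suc \<nu>) j - x \<nu> j)) \<le> sqrt (stack_sq (\<lambda>j. A j + B j)) + sqrt (stack_sq C)"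
    unfolding eq by (rule stack_tri)
  also have "\<dots> \<le> (sqrt (stack_sq A) + sqrt (stack_sq B)) + sqrt (stack_sq C)"
    by (intro add_right_mono stack_tri)
  also have "\<dots> \<le> (sqrt X + sqrt X) + \<alpha> * sqrt DD"
  proof -
    have a1: "sqrt (stack_sq A) \<le> sqrt X" using real_sqrt_le_mono[OF sA] .
    have a2: "sqrt (stack_sq C) \<le> sqrt (\<alpha>\<^sup>2 * DD)" using real_sqrt_le_mono[OF sC] .
    have a3: "sqrt (\<alpha>\<^sup>2 * DD) = \<alpha> * sqrt DD" using t by (simp add: real_sqrt_mult)
    show ?thesis unfolding sB using a1 a2 a3 by linarith
  qed
  finally have "stack_sq (\<lambda>j. x (Suc \<nu>) j - x \<nu> j) \<le> (2 * sqrt X + \<alpha> * sqrt DD)\<^sup>2"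
    using t X0 D0 stack_sq_nonneg by (intro sqrt_sq_le) auto
  also have "\<dots> \<le> 2 * (2 * sqrt X)\<^sup>2 + 2 * (\<alpha> * sqrt DD)\<^sup>2" by (rule sq_sum2)
  also have "\<dots> = 8 * X + 2 * \<alpha>\<^sup>2 * DD" using X0 D0 by (simp add: power_mult_distrib)
  finally show ?thesis unfolding X_def DD_def .
qed

lemma Y_step:
  "perp_sq (y (Suc \<nu>)) \<le> \<rho>\<^sup>2 * (1 + \<epsilon>y) * perp_sq (y \<nu>)
     + \<rho>\<^sup>2 * (1 + 1 / \<epsilon>y) * (8 * Lmax\<^sup>2 * perp_sq (x \<nu>) + 2 * Lmax\<^sup>2 * \<alpha>\<^sup>2 * stack_sq (d \<nu>))"
proof -
  define \<Delta> where "\<Delta> j = gf j (x (Suc \<nu>) j) - gf j (x \<nu> j)" for j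
  define Y where "Y = perp_sq (y \<nu>)"
  define S where "S = stack_sq \<Delta>"
  define R where "R = 8 * perp_sq (x \<nu>) + 2 * \<alpha>\<^sup>2 * stack_sq (d \<nu>)"
  have Y0: "Y \<ge> 0" unfolding Y_def by (rule perp_nonneg)
  have S0: "S \<ge> 0" unfolding S_def by (rule stack_sq_nonneg)
  have ys: "y (Suc \<nu>) = (\<lambda>i. \<Sum>j\<in>UNIV. W i j *\<^sub>R (y \<nu> j + \<Delta> j))"
    using y_update by (simp add: fun_eq_iff \<Delta>_def add_diff_eq)
  have SS: "S \<le> Lmax\<^sup>2 * R"
  proof -
    have "S \<le> (\<Sum>j\<in>UNIV. Lmax\<^sup>2 * (norm (x (Suc \<nu>) j - x \<nu> j))\<^sup>2)"
      unfolding S_def stack_sq_def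
    proof (intro sum_mono)
      fix j
      have "norm (\<Delta> j) \<le> Lmax * norm (x (Suc \<nu>) j - x \<nu> j)"
        unfolding \<Delta>_def by (rule gf_lip_max[OF x_in x_in])
      hence "(norm (\<Delta> j))\<^sup>2 \<le> (Lmax * norm (x (Suc \<nu>) j - x \<nu> j))\<^sup>2" by (intro power_mono) auto
      thus "(norm (\<Delta> j))\<^sup>2 \<le> Lmax\<^sup>2 * (norm (x (Suc \<nu>) j - x \<nu> j))\<^sup>2" by (simp add: power_mult_distrib)
    qed
    also have "\<dots> = Lmax\<^sup>2 * stack_sq (\<lambda>j. x (Suc \<nu>) j - x \<nu> j)" unfolding stack_sq_def by (simp add: sum_distrib_left)
    also have "\<dots> \<le> Lmax\<^sup>2 * R" unfolding R_def by (intro mult_left_mono SX_bound) auto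
    finally show ?thesis .
  qed
  have "sqrt (perp_sq (\<lambda>j. y \<nu> j + \<Delta> j)) \<le> sqrt Y + sqrt (perp_sq \<Delta>)"
    unfolding Y_def by (rule perp_tri)
  also have "\<dots> \<le> sqrt Y + sqrt S" unfolding S_def using perp_le_stack[of \<Delta>] by simp
  finally have "perp_sq (\<lambda>j. y \<nu> j + \<Delta> j) \<le> (sqrt Y + sqrt S)\<^sup>2"
    using Y0 S0 perp_nonneg by (intro sqrt_sq_le) auto
  also have "\<dots> \<le> (1 + \<epsilon>y) * (sqrt Y)\<^sup>2 + (1 + 1 / \<epsilon>y) * (sqrt S)\<^sup>2"
    using Y0 S0 eps_y_pos by (intro sq_split) auto
  also have "\<dots> = (1 + \<epsilon>y) * Y + (1 + 1 / \<epsilon>y) * S" using Y0 S0 by simp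
  also have "\<dots> \<le> (1 + \<epsilon>y) * Y + (1 + 1 / \<epsilon>y) * (Lmax\<^sup>2 * R)"
    using SS eps_y_pos by (intro add_left_mono mult_left_mono) auto
  finally have w: "perp_sq (\<lambda>j. y \<nu> j + \<Delta> j) \<le> (1 + \<epsilon>y) * Y + (1 + 1 / \<epsilon>y) * (Lmax\<^sup>2 * R)" .
  have "perp_sq (y (Suc \<nu>)) \<le> \<rho>\<^sup>2 * perp_sq (\<lambda>j. y \<nu> j + \<Delta> j)"
    unfolding ys by (rule perp_W)
  also have "\<dots> \<le> \<rho>\<^sup>2 * ((1 + \<epsilon>y) * Y + (1 + 1 / \<epsilon>y) * (Lmax\<^sup>2 * R))"
    using w by (intro mult_left_mono) auto
  finally show ?thesis unfolding Y_def R_def by (simp add: algebra_simps)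
qed

lemma ybar: "mean (y \<nu>) = (1 / m) *\<^sub>R (\<Sum>j\<in>UNIV. gf j (x \<nu> j))"
  unfolding mean_def track m_def ..

lemma ybar_gF: "mean (y \<nu>) - gF u = (\<Sum>j\<in>UNIV. (1 / m) *\<^sub>R (gf j (x \<nu> j) - gf j u))"
  unfolding ybar gF_def by (simp add: scaleR_sum_right[symmetric] sum_subtractf scaleR_diff_right)

lemma inv_m_sum: "(\<Sum>j\<in>(UNIV::'i set). 1 / m) = 1"
  using card_pos unfolding m_def by simp

lemma e_sum:
  "(\<Sum>i\<in>UNIV. (norm (y \<nu> i - gF (x \<nu> i)))\<^sup>2) \<le> 2 * perp_sq (y \<nu>) + 4 * Lmax\<^sup>2 * perp_sq (x \<nu>)"
proof -
  define yb where "yb = mean (y \<nu>)"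
  have b1: "(norm (y \<nu> i - gF (x \<nu> i)))\<^sup>2 \<le> 2 * (norm (y \<nu> i - yb))\<^sup>2 + 2 * (norm (yb - gF (x \<nu> i)))\<^sup>2" for i
    using norm_sum2[of "y \<nu> i - yb" "yb - gF (x \<nu> i)"] by simp
  have b2: "(norm (yb - gF (x \<nu> i)))\<^sup>2 \<le> (\<Sum>j\<in>UNIV. (1 / m) * (Lmax\<^sup>2 * (norm (x \<nu> j - x \<nu> i))\<^sup>2))" for i
  proof -
    have "(norm (yb - gF (x \<nu> i)))\<^sup>2 \<le> (\<Sum>j\<in>UNIV. (1 / m) * (norm (gf j (x \<nu> j) - gf j (x \<nu> i)))\<^sup>2)"
      unfolding yb_def ybar_gF using card_pos by (intro jensen_norm inv_m_sum) auto
    also have "\<dots> \<le> (\<Sum>j\<in>UNIV. (1 / m) * (Lmax\<^sup>2 * (norm (x \<nu> j - x \<nu> i))\<^sup>2))"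
    proof (intro sum_mono mult_left_mono)
      fix j
      have "norm (gf j (x \<nu> j) - gf j (x \<nu> i)) \<le> Lmax * norm (x \<nu> j - x \<nu> i)" by (rule gf_lip_max[OF x_in x_in])
      hence "(norm (gf j (x \<nu> j) - gf j (x \<nu> i)))\<^sup>2 \<le> (Lmax * norm (x \<nu> j - x \<nu> i))\<^sup>2" by (intro power_mono) auto
      thus "(norm (gf j (x \<nu> j) - gf j (x \<nu> i)))\<^sup>2 \<le> Lmax\<^sup>2 * (norm (x \<nu> j - x \<nu> i))\<^sup>2" by (simp add: power_mult_distrib)
    qed (use card_pos in auto)
    finally show ?thesis .
  qed
  have "(\<Sum>i\<in>UNIV. (norm (y \<nu> i - gF (x \<nu> i)))\<^sup>2)
      \<le> (\<Sum>i\<in>UNIV. 2 * (norm (y \<nu> i - yb))\<^sup>2 + 2 * (\<Sum>j\<in>UNIV. (1 / m) * (Lmax\<^sup>2 * (norm (x \<nu> j - x \<nu> i))\<^sup>2)))"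
    using b1 b2 by (intro sum_mono) (meson add_left_mono mult_left_mono order_trans zero_le_numeral)
  also have "\<dots> = 2 * perp_sq (y \<nu>) + 2 * (Lmax\<^sup>2 / m) * (\<Sum>i\<in>UNIV. \<Sum>j\<in>UNIV. (norm (x \<nu> j - x \<nu> i))\<^sup>2)"
    unfolding perp_sq_def yb_def mean_def
    by (simp add: sum.distrib sum_distrib_left algebra_simps)
  also have "\<dots> = 2 * perp_sq (y \<nu>) + 4 * Lmax\<^sup>2 * perp_sq (x \<nu>)"
    unfolding pair_sum m_def[symmetric] using card_pos by simp
  finally show ?thesis .
qed

end

lemma sq3: fixes a b c :: real shows "(a + b + c)\<^sup>2 \<le> 3 * (a\<^sup>2 + b\<^sup>2 + c\<^sup>2)"
proof -
  have "0 \<le> (a - b)\<^sup>2 + (b - c)\<^sup>2 + (a - c)\<^sup>2" by simp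
  thus ?thesis by (simp add: power2_eq_square algebra_simps)
qed

context sonata begin

lemma dist_bound:
  "norm (d \<nu> i) \<le> (Dmax / \<mu>tmin + 1) * norm (x \<nu> i - xstar) + norm (y \<nu> i - mean (y \<nu>)) / \<mu>tmin
     + Lmax / \<mu>tmin * (norm (x \<nu> i - xstar) + (\<Sum>j\<in>UNIV. (1 / m) * norm (x \<nu> j - xstar)))"
proof -
  define xv where "xv = x \<nu> i"
  define xh where "xh = xhat \<nu> i"
  define yv where "yv = y \<nu> i"
  define yb where "yb = mean (y \<nu>)"
  define ei where "ei = norm (xv - xstar)"
  define eb where "eb = (\<Sum>j\<in>UNIV. (1 / m) * norm (x \<nu> j - xstar))"
  define w where "w = xh - xstar"
  define c where "c = yv - gf i xv - gF xstar + gft i xstar xv"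
  have xv: "xv \<in> Kset" and xh: "xh \<in> Kset" unfolding xv_def xh_def using x_in xhat_in by auto
  have mp: "\<mu>t i > 0" using mut_pos by blast
  have stepA: "\<mu>t i * (norm w)\<^sup>2 \<le> norm c * norm w"
  proof -
    define I1 where "I1 = gft i xh xv \<bullet> w"
    define I2 where "I2 = gft i xstar xv \<bullet> w"
    define I3 where "I3 = (yv - gf i xv) \<bullet> w"
    define I4 where "I4 = gF xstar \<bullet> w"
    have mw: "xstar - xh = - w" unfolding w_def by simp
    have V1: "-(I1 + I3) \<ge> G xh - G xstar"
    proof -
      have "(gft i xh xv + yv - gf i xv) \<bullet> (xstar - xh) \<ge> G xh - G xstar"
        unfolding xh_def xv_def yv_def by (rule xhat_VI[OF xstar_in])
      thus ?thesis unfolding mw I1_def I3_def by (simp add: inner_add_left inner_diff_left algebra_simps)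
    qed
    have V2: "I4 \<ge> G xstar - G xh"
      unfolding I4_def w_def by (rule xstar_VI[OF xh])
    have T1: "ft i xstar xv \<ge> ft i xh xv - I1 + \<mu>t i / 2 * (norm w)\<^sup>2"
      using ft_tangent[OF xh xstar_in xv, where i=i] unfolding mw I1_def by simp
    have T2: "ft i xh xv \<ge> ft i xstar xv + I2 + \<mu>t i / 2 * (norm w)\<^sup>2"
      using ft_tangent[OF xstar_in xh xv, where i=i] unfolding I2_def w_def by simp
    have cw: "c \<bullet> w = I3 - I4 + I2" unfolding c_def I2_def I3_def I4_def by (simp add: inner_add_left inner_diff_left)
    have "\<mu>t i * (norm w)\<^sup>2 \<le> - (c \<bullet> w)" using V1 V2 T1 T2 cw by linarith
    also have "\<dots> \<le> norm c * norm w" using Cauchy_Schwarz_ineq2[of c w] by linarith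
    finally show ?thesis .
  qed
  have stepB: "norm w \<le> norm c / \<mu>t i"
  proof (cases "norm w = 0")
    case True thus ?thesis using mp by simp
  next
    case False
    hence "\<mu>t i * norm w * norm w \<le> norm c * norm w" using stepA by (simp add: power2_eq_square mult.assoc)
    hence "\<mu>t i * norm w \<le> norm c" using False by simp
    thus ?thesis using mp by (simp add: field_simps)
  qed
  have stepC: "norm c \<le> norm (yv - yb) + Lmax * (eb + ei) + Dmax * ei"
  proof -
    have cons: "gft i xv xv = gf i xv" using ft_consistent KO[OF xv] by blast
    have ceq: "c = ((yv - yb) + (yb - gF xv)) + ((gft i xstar xv - gF xstar) - (gft i xv xv - gF xv))"
      unfolding c_def cons by (simp add: algebra_simps)
    have n2: "norm (yb - gF xv) \<le> Lmax * (eb + ei)"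
    proof -
      have "norm (yb - gF xv) \<le> (\<Sum>j\<in>UNIV. norm ((1 / m) *\<^sub>R (gf j (x \<nu> j) - gf j xv)))"
        unfolding yb_def ybar_gF by (rule norm_sum)
      also have "\<dots> \<le> (\<Sum>j\<in>UNIV. (1 / m) * (Lmax * (norm (x \<nu> j - xstar) + ei)))"
      proof (intro sum_mono)
        fix j
        have "norm (x \<nu> j - xv) \<le> norm (x \<nu> j - xstar) + ei"
          using norm_triangle_ineq4[of "x \<nu> j - xstar" "xv - xstar"] unfolding ei_def by simp
        hence "Lmax * norm (x \<nu> j - xv) \<le> Lmax * (norm (x \<nu> j - xstar) + ei)"
          using Lmax_nonneg by (rule mult_left_mono)
        hence "norm (gf j (x \<nu> j) - gf j xv) \<le> Lmax * (norm (x \<nu> j - xstar) + ei)"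
          using gf_lip_max[OF x_in[of \<nu> j] xv, of j] by linarith
        hence "(1 / m) * norm (gf j (x \<nu> j) - gf j xv) \<le> (1 / m) * (Lmax * (norm (x \<nu> j - xstar) + ei))"
          using card_pos by (intro mult_left_mono) auto
        thus "norm ((1 / m) *\<^sub>R (gf j (x \<nu> j) - gf j xv)) \<le> (1 / m) * (Lmax * (norm (x \<nu> j - xstar) + ei))"
          using card_pos by simp
      qed
      also have "\<dots> = Lmax * (eb + ei * (\<Sum>j\<in>(UNIV::'i set). 1 / m))"
        unfolding eb_def by (simp add: algebra_simps sum.distrib sum_distrib_left sum_distrib_right)
      also have "\<dots> = Lmax * (eb + ei)" using inv_m_sum by simp
      finally show ?thesis .
    qed
    have n3: "norm ((gft i xstar xv - gF xstar) - (gft i xv xv - gF xv)) \<le> Dmax * ei"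
    proof -
      have "norm ((gft i xstar xv - gF xstar) - (gft i xv xv - gF xv)) \<le> D i * norm (xstar - xv)"
        by (rule gh_lip[OF xstar_in xv xv])
      also have "\<dots> \<le> Dmax * ei" unfolding ei_def using D_le[of i] by (simp add: norm_minus_commute mult_right_mono)
      finally show ?thesis .
    qed
    have "norm c \<le> norm ((yv - yb) + (yb - gF xv)) + norm ((gft i xstar xv - gF xstar) - (gft i xv xv - gF xv))"
      unfolding ceq by (rule norm_triangle_ineq)
    also have "\<dots> \<le> (norm (yv - yb) + norm (yb - gF xv)) + norm ((gft i xstar xv - gF xstar) - (gft i xv xv - gF xv))"
      by (intro add_right_mono norm_triangle_ineq)
    finally show ?thesis using n2 n3 by linarith
  qed
  have stepD: "norm (xh - xv) \<le> norm w + ei"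
  proof -
    have "xh - xv = w + (xstar - xv)" unfolding w_def by simp
    hence "norm (xh - xv) = norm (w + (xstar - xv))" by (simp add: algebra_simps)
    also have "\<dots> \<le> norm w + norm (xstar - xv)" by (rule norm_triangle_ineq)
    finally have "norm (xh - xv) \<le> norm w + norm (xstar - xv)" .
    thus ?thesis unfolding ei_def by (simp add: norm_minus_commute)
  qed
  have "norm c / \<mu>t i \<le> norm c / \<mu>tmin"
    using mut_ge[of i] mutmin_pos by (intro divide_left_mono) auto
  also have "\<dots> \<le> (norm (yv - yb) + Lmax * (eb + ei) + Dmax * ei) / \<mu>tmin"
    using stepC mutmin_pos by (intro divide_right_mono) auto
  finally have "norm (xh - xv) \<le> (norm (yv - yb) + Lmax * (eb + ei) + Dmax * ei) / \<mu>tmin + ei"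
    using stepB stepD by linarith
  also have "\<dots> = (Dmax / \<mu>tmin + 1) * ei + norm (yv - yb) / \<mu>tmin + Lmax / \<mu>tmin * (ei + eb)"
    by (simp add: add_divide_distrib algebra_simps)
  finally show ?thesis unfolding xh_def xv_def yv_def yb_def ei_def eb_def d_eq .
qed

lemma D_bound: "stack_sq (d \<nu>) \<le> C1 * p \<nu> + C2 * perp_sq (y \<nu>)"
proof -
  define K1 where "K1 = Dmax / \<mu>tmin + 1"
  define e where "e j = norm (x \<nu> j - xstar)" for j
  define eb where "eb = (\<Sum>j\<in>UNIV. (1 / m) * e j)"
  define yp where "yp j = norm (y \<nu> j - mean (y \<nu>))" for j
  define S where "S = (\<Sum>j\<in>UNIV. (e j)\<^sup>2)"
  define Y where "Y = perp_sq (y \<nu>)"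
  define M where "M = \<mu>tmin"
  have M: "M > 0" unfolding M_def by (rule mutmin_pos)
  have Yeq: "Y = (\<Sum>j\<in>UNIV. (yp j)\<^sup>2)" unfolding Y_def yp_def perp_sq_def mean_def ..
  have Y0: "Y \<ge> 0" unfolding Y_def by (rule perp_nonneg)
  have S0: "S \<ge> 0" unfolding S_def by (simp add: sum_nonneg)
  have di: "(norm (d \<nu> i))\<^sup>2 \<le> 3 * ((K1 * e i)\<^sup>2 + (yp i / M)\<^sup>2 + (Lmax / M * (e i + eb))\<^sup>2)" for i
  proof -
    have "norm (d \<nu> i) \<le> K1 * e i + yp i / M + Lmax / M * (e i + eb)"
      using dist_bound[of \<nu> i] unfolding K1_def e_def eb_def yp_def M_def .
    hence "(norm (d \<nu> i))\<^sup>2 \<le> (K1 * e i + yp i / M + Lmax / M * (e i + eb))\<^sup>2" by (intro power_mono) auto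
    also have "\<dots> \<le> 3 * ((K1 * e i)\<^sup>2 + (yp i / M)\<^sup>2 + (Lmax / M * (e i + eb))\<^sup>2)" by (rule sq3)
    finally show ?thesis .
  qed
  have ebS: "m * eb\<^sup>2 \<le> S"
  proof -
    have "eb\<^sup>2 \<le> (\<Sum>j\<in>UNIV. (1 / m) * (e j)\<^sup>2)" unfolding eb_def using card_pos by (intro jensen_real inv_m_sum) auto
    also have "\<dots> = S / m" unfolding S_def by (simp add: sum_divide_distrib)
    finally show ?thesis using card_pos by (simp add: field_simps)
  qed
  have sum_e: "(\<Sum>i\<in>UNIV. (e i + eb)\<^sup>2) \<le> 4 * S"
  proof -
    have "(\<Sum>i\<in>UNIV. (e i + eb)\<^sup>2) \<le> (\<Sum>i\<in>UNIV. 2 * (e i)\<^sup>2 + 2 * eb\<^sup>2)" by (intro sum_mono sq_sum2)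
    also have "\<dots> = 2 * S + 2 * (m * eb\<^sup>2)" unfolding S_def m_def by (simp add: sum.distrib sum_distrib_left)
    finally show ?thesis using ebS by linarith
  qed
  have Sp: "S \<le> 2 / \<mu> * p \<nu>"
  proof -
    have "S \<le> (\<Sum>j\<in>UNIV. 2 / \<mu> * (U (x \<nu> j) - Ustar))"
      unfolding S_def e_def
    proof (intro sum_mono)
      fix j
      have "\<mu> / 2 * (norm (x \<nu> j - xstar))\<^sup>2 \<le> U (x \<nu> j) - Ustar" by (rule U_growth[OF x_in])
      thus "(norm (x \<nu> j - xstar))\<^sup>2 \<le> 2 / \<mu> * (U (x \<nu> j) - Ustar)" using mu_pos by (simp add: field_simps)
    qed
    also have "\<dots> = 2 / \<mu> * p \<nu>" unfolding p_def by (simp add: sum_distrib_left)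
    finally show ?thesis .
  qed
  have "stack_sq (d \<nu>) \<le> (\<Sum>i\<in>UNIV. 3 * ((K1 * e i)\<^sup>2 + (yp i / M)\<^sup>2 + (Lmax / M * (e i + eb))\<^sup>2))"
    unfolding stack_sq_def by (intro sum_mono di)
  also have "\<dots> = (\<Sum>i\<in>UNIV. 3 * (K1\<^sup>2 * (e i)\<^sup>2) + 3 * ((yp i)\<^sup>2 / M\<^sup>2) + 3 * (Lmax\<^sup>2 / M\<^sup>2 * (e i + eb)\<^sup>2))"
  proof (intro sum.cong refl)
    fix i
    have t1: "(K1 * e i)\<^sup>2 = K1\<^sup>2 * (e i)\<^sup>2" by (rule power_mult_distrib)
    have t2: "(yp i / M)\<^sup>2 = (yp i)\<^sup>2 / M\<^sup>2" by (rule power_divide)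
    have t3: "(Lmax / M * (e i + eb))\<^sup>2 = Lmax\<^sup>2 / M\<^sup>2 * (e i + eb)\<^sup>2" by (simp add: power_mult_distrib power_divide)
    show "3 * ((K1 * e i)\<^sup>2 + (yp i / M)\<^sup>2 + (Lmax / M * (e i + eb))\<^sup>2) =
        3 * (K1\<^sup>2 * (e i)\<^sup>2) + 3 * ((yp i)\<^sup>2 / M\<^sup>2) + 3 * (Lmax\<^sup>2 / M\<^sup>2 * (e i + eb)\<^sup>2)"
      unfolding t1 t2 t3 by (simp only: distrib_left)
  qed
  also have "\<dots> = 3 * (K1\<^sup>2 * S) + 3 * (Y / M\<^sup>2) + 3 * (Lmax\<^sup>2 / M\<^sup>2 * (\<Sum>i\<in>UNIV. (e i + eb)\<^sup>2))"
    unfolding S_def Yeq by (simp only: sum.distrib sum_distrib_left sum_divide_distrib)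
  also have "\<dots> \<le> 3 * (K1\<^sup>2 * S) + 3 * (Y / M\<^sup>2) + 3 * (Lmax\<^sup>2 / M\<^sup>2 * (4 * S))"
    using sum_e by (intro add_left_mono mult_left_mono) auto
  also have "\<dots> = 3 * (K1\<^sup>2 + 4 * Lmax\<^sup>2 / M\<^sup>2) * S + 3 / M\<^sup>2 * Y"
    by (simp add: power_divide algebra_simps)
  also have "\<dots> \<le> 3 * (K1\<^sup>2 + 4 * Lmax\<^sup>2 / M\<^sup>2) * (2 / \<mu> * p \<nu>) + 4 / M\<^sup>2 * Y"
  proof (intro add_mono mult_left_mono)
    show "S \<le> 2 / \<mu> * p \<nu>" by (rule Sp)
    show "0 \<le> 3 * (K1\<^sup>2 + 4 * Lmax\<^sup>2 / M\<^sup>2)" by simp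
    show "3 / M\<^sup>2 * Y \<le> 4 / M\<^sup>2 * Y" using Y0 M by (intro mult_right_mono divide_right_mono) auto
  qed
  also have "\<dots> = C1 * p \<nu> + C2 * Y"
    unfolding C1_def C2_def K1_def M_def by (simp add: algebra_simps)
  finally show ?thesis unfolding Y_def .
qed

end

lemma le_maxtr_nn: "n \<le> K \<Longrightarrow> 0 \<le> s n \<Longrightarrow> s n / z ^ n \<le> maxtr s K z"
  using le_maxtr[of n K s z] by simp

context sonata begin

lemma p_nonneg: "p n \<ge> 0"
  unfolding p_def using xstar_min[OF x_in] Ustar_eq by (intro sum_nonneg) auto

lemma sigma_nonneg: "\<sigma> \<ge> 0"
proof -
  have DD: "Dmax\<^sup>2 / \<mu> \<ge> 0" using mu_pos by simp
  have "\<alpha> * a \<le> Dmax\<^sup>2 / \<mu> + a" using alpha_range a_pos DD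
    by (smt (verit) mult_left_le_one_le)
  hence "\<alpha> * a / (Dmax\<^sup>2 / \<mu> + a) \<le> 1" using DD a_pos by (simp add: divide_le_eq)
  thus ?thesis unfolding sigma_def by simp
qed

lemma eta_nonneg: "\<eta> \<ge> 0"
proof -
  have den: "Dmax\<^sup>2 / \<mu> + a > 0" using mu_pos a_pos by (simp add: add_nonneg_pos)
  show ?thesis unfolding eta_def using alpha_range eps_opt_pos mu_pos a_pos den
    by (intro divide_nonneg_pos add_nonneg_nonneg mult_nonneg_nonneg) auto
qed

lemma C1_nonneg: "C1 \<ge> 0" unfolding C1_def using mu_pos by simp
lemma C2_nonneg: "C2 \<ge> 0" unfolding C2_def by simp

lemma main:
  "\<forall>Kn::nat. \<forall>z::real.
      max \<sigma> (max (\<rho>\<^sup>2 * (1 + \<epsilon>x)) (\<rho>\<^sup>2 * (1 + \<epsilon>y))) < z \<and> z < 1 \<longrightarrow>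
      (let P = maxtr p Kn z;
           X = maxtr (\<lambda>\<nu>. perp_sq (x \<nu>)) Kn z;
           Y = maxtr (\<lambda>\<nu>. perp_sq (y \<nu>)) Kn z;
           DD = maxtr (\<lambda>\<nu>. stack_sq (d \<nu>)) Kn z;
           GP = \<eta> / (z - \<sigma>);
           \<omega>p = z / (z - \<sigma>) * p 0;
           GX = (1 + 1 / \<epsilon>x) / (z - \<rho>\<^sup>2 * (1 + \<epsilon>x));
           \<omega>x = z / (z - \<rho>\<^sup>2 * (1 + \<epsilon>x)) * perp_sq (x 0);
           GY = (1 + 1 / \<epsilon>y) / (z - \<rho>\<^sup>2 * (1 + \<epsilon>y));
           \<omega>y = z / (z - \<rho>\<^sup>2 * (1 + \<epsilon>y)) * perp_sq (y 0)
       in P \<le> GP * (4 * Lmax\<^sup>2 * X + 2 * Y) + \<omega>p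
        \<and> X \<le> GX * \<rho>\<^sup>2 * \<alpha>\<^sup>2 * DD + \<omega>x
        \<and> Y \<le> GY * (8 * Lmax\<^sup>2) * \<rho>\<^sup>2 * X + GY * (2 * Lmax\<^sup>2) * \<rho>\<^sup>2 * \<alpha>\<^sup>2 * DD + \<omega>y
        \<and> DD \<le> C1 * P + C2 * Y)"
proof (intro allI impI)
  fix Kn :: nat and z :: real
  assume zr: "max \<sigma> (max (\<rho>\<^sup>2 * (1 + \<epsilon>x)) (\<rho>\<^sup>2 * (1 + \<epsilon>y))) < z \<and> z < 1"
  define lx where "lx = \<rho>\<^sup>2 * (1 + \<epsilon>x)"
  define ly where "ly = \<rho>\<^sup>2 * (1 + \<epsilon>y)"
  have sz: "\<sigma> < z" and lxz: "lx < z" and lyz: "ly < z" using zr unfolding lx_def ly_def by auto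
  have lx0: "lx \<ge> 0" unfolding lx_def using eps_x_pos by simp
  have ly0: "ly \<ge> 0" unfolding ly_def using eps_y_pos by simp
  have z0: "z > 0" using sigma_nonneg sz by simp
  define P where "P = maxtr p Kn z"
  define X where "X = maxtr (\<lambda>\<nu>. perp_sq (x \<nu>)) Kn z"
  define Y where "Y = maxtr (\<lambda>\<nu>. perp_sq (y \<nu>)) Kn z"
  define DD where "DD = maxtr (\<lambda>\<nu>. stack_sq (d \<nu>)) Kn z"
  have X0: "X \<ge> 0" unfolding X_def using z0 by (rule maxtr_nonneg)
  have Y0: "Y \<ge> 0" unfolding Y_def using z0 by (rule maxtr_nonneg)
  have D0: "DD \<ge> 0" unfolding DD_def using z0 by (rule maxtr_nonneg)
  have L0: "Lmax\<^sup>2 \<ge> 0" by simp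
  have zn: "z ^ n > 0" for n using z0 by simp
  have PP: "P \<le> \<eta> / (z - \<sigma>) * (4 * Lmax\<^sup>2 * X + 2 * Y) + z / (z - \<sigma>) * p 0"
  proof -
    have "P \<le> \<eta> * (4 * Lmax\<^sup>2 * X + 2 * Y) / (z - \<sigma>) + z / (z - \<sigma>) * p 0"
      unfolding P_def
    proof (rule transform_bound[where e="\<lambda>n. 4 * Lmax\<^sup>2 * perp_sq (x n) + 2 * perp_sq (y n)"])
      show "p (Suc n) \<le> \<sigma> * p n + \<eta> * (4 * Lmax\<^sup>2 * perp_sq (x n) + 2 * perp_sq (y n))" if "n < Kn" for n
      proof -
        have "\<eta> * (\<Sum>i\<in>UNIV. (norm (y n i - gF (x n i)))\<^sup>2) \<le> \<eta> * (2 * perp_sq (y n) + 4 * Lmax\<^sup>2 * perp_sq (x n))"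
          using eta_nonneg e_sum by (intro mult_left_mono) auto
        thus ?thesis using p_step[of n] by (simp add: algebra_simps)
      qed
      show "(4 * Lmax\<^sup>2 * perp_sq (x n) + 2 * perp_sq (y n)) / z ^ n \<le> 4 * Lmax\<^sup>2 * X + 2 * Y" if "n \<le> Kn" for n
      proof -
        have a1: "perp_sq (x n) / z ^ n \<le> X" unfolding X_def using that perp_nonneg by (rule le_maxtr_nn)
        have a2: "perp_sq (y n) / z ^ n \<le> Y" unfolding Y_def using that perp_nonneg by (rule le_maxtr_nn)
        have "(4 * Lmax\<^sup>2 * perp_sq (x n) + 2 * perp_sq (y n)) / z ^ n
            = 4 * Lmax\<^sup>2 * (perp_sq (x n) / z ^ n) + 2 * (perp_sq (y n) / z ^ n)"
          by (simp add: add_divide_distrib)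
        also have "\<dots> \<le> 4 * Lmax\<^sup>2 * X + 2 * Y"
          using a1 a2 by (intro add_mono mult_left_mono) auto
        finally show ?thesis .
      qed
    qed (use p_nonneg sigma_nonneg sz eta_nonneg X0 Y0 in auto)
    thus ?thesis by simp
  qed
  have XX: "X \<le> (1 + 1 / \<epsilon>x) / (z - lx) * \<rho>\<^sup>2 * \<alpha>\<^sup>2 * DD + z / (z - lx) * perp_sq (x 0)"
  proof -
    have "X \<le> (\<rho>\<^sup>2 * (1 + 1 / \<epsilon>x) * \<alpha>\<^sup>2) * DD / (z - lx) + z / (z - lx) * perp_sq (x 0)"
      unfolding X_def
    proof (rule transform_bound[where e="\<lambda>n. stack_sq (d n)"])
      show "perp_sq (x (Suc n)) \<le> lx * perp_sq (x n) + \<rho>\<^sup>2 * (1 + 1 / \<epsilon>x) * \<alpha>\<^sup>2 * stack_sq (d n)" if "n < Kn" for n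
        using X_step[of n] unfolding lx_def .
      show "stack_sq (d n) / z ^ n \<le> DD" if "n \<le> Kn" for n
        unfolding DD_def using that stack_sq_nonneg by (rule le_maxtr_nn)
    qed (use perp_nonneg lx0 lxz D0 eps_x_pos in auto)
    also have "(\<rho>\<^sup>2 * (1 + 1 / \<epsilon>x) * \<alpha>\<^sup>2) * DD / (z - lx) = (1 + 1 / \<epsilon>x) / (z - lx) * \<rho>\<^sup>2 * \<alpha>\<^sup>2 * DD"
      by (simp add: algebra_simps)
    finally show ?thesis .
  qed
  have YY: "Y \<le> (1 + 1 / \<epsilon>y) / (z - ly) * (8 * Lmax\<^sup>2) * \<rho>\<^sup>2 * X
      + (1 + 1 / \<epsilon>y) / (z - ly) * (2 * Lmax\<^sup>2) * \<rho>\<^sup>2 * \<alpha>\<^sup>2 * DD + z / (z - ly) * perp_sq (y 0)"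
  proof -
    have "Y \<le> (\<rho>\<^sup>2 * (1 + 1 / \<epsilon>y)) * (8 * Lmax\<^sup>2 * X + 2 * Lmax\<^sup>2 * \<alpha>\<^sup>2 * DD) / (z - ly) + z / (z - ly) * perp_sq (y 0)"
      unfolding Y_def
    proof (rule transform_bound[where e="\<lambda>n. 8 * Lmax\<^sup>2 * perp_sq (x n) + 2 * Lmax\<^sup>2 * \<alpha>\<^sup>2 * stack_sq (d n)"])
      show "perp_sq (y (Suc n)) \<le> ly * perp_sq (y n) + \<rho>\<^sup>2 * (1 + 1 / \<epsilon>y) * (8 * Lmax\<^sup>2 * perp_sq (x n) + 2 * Lmax\<^sup>2 * \<alpha>\<^sup>2 * stack_sq (d n))" if "n < Kn" for n
        using Y_step[of n] unfolding ly_def .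
      show "(8 * Lmax\<^sup>2 * perp_sq (x n) + 2 * Lmax\<^sup>2 * \<alpha>\<^sup>2 * stack_sq (d n)) / z ^ n \<le> 8 * Lmax\<^sup>2 * X + 2 * Lmax\<^sup>2 * \<alpha>\<^sup>2 * DD" if "n \<le> Kn" for n
      proof -
        have a1: "perp_sq (x n) / z ^ n \<le> X" unfolding X_def using that perp_nonneg by (rule le_maxtr_nn)
        have a2: "stack_sq (d n) / z ^ n \<le> DD" unfolding DD_def using that stack_sq_nonneg by (rule le_maxtr_nn)
        have "(8 * Lmax\<^sup>2 * perp_sq (x n) + 2 * Lmax\<^sup>2 * \<alpha>\<^sup>2 * stack_sq (d n)) / z ^ n
            = 8 * Lmax\<^sup>2 * (perp_sq (x n) / z ^ n) + 2 * Lmax\<^sup>2 * \<alpha>\<^sup>2 * (stack_sq (d n) / z ^ n)"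
          by (simp add: add_divide_distrib)
        also have "\<dots> \<le> 8 * Lmax\<^sup>2 * X + 2 * Lmax\<^sup>2 * \<alpha>\<^sup>2 * DD"
          using a1 a2 by (intro add_mono mult_left_mono) auto
        finally show ?thesis .
      qed
    qed (use perp_nonneg ly0 lyz X0 D0 eps_y_pos in auto)
    also have "(\<rho>\<^sup>2 * (1 + 1 / \<epsilon>y)) * (8 * Lmax\<^sup>2 * X + 2 * Lmax\<^sup>2 * \<alpha>\<^sup>2 * DD) / (z - ly)
        = (1 + 1 / \<epsilon>y) / (z - ly) * (8 * Lmax\<^sup>2) * \<rho>\<^sup>2 * X + (1 + 1 / \<epsilon>y) / (z - ly) * (2 * Lmax\<^sup>2) * \<rho>\<^sup>2 * \<alpha>\<^sup>2 * DD"
      by (simp add: algebra_simps add_divide_distrib)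
    finally show ?thesis .
  qed
  have DDb: "DD \<le> C1 * P + C2 * Y"
    unfolding DD_def
  proof (rule maxtr_le)
    fix n assume n: "n \<le> Kn"
    have a1: "p n / z ^ n \<le> P" unfolding P_def using n p_nonneg by (rule le_maxtr_nn)
    have a2: "perp_sq (y n) / z ^ n \<le> Y" unfolding Y_def using n perp_nonneg by (rule le_maxtr_nn)
    have "\<bar>stack_sq (d n)\<bar> = stack_sq (d n)" using stack_sq_nonneg[of "d n"] by simp
    hence "\<bar>stack_sq (d n)\<bar> / z ^ n = stack_sq (d n) / z ^ n" by simp
    also have "\<dots> \<le> (C1 * p n + C2 * perp_sq (y n)) / z ^ n"
      using D_bound[of n] zn[of n] by (intro divide_right_mono) auto
    also have "\<dots> = C1 * (p n / z ^ n) + C2 * (perp_sq (y n) / z ^ n)" by (simp add: add_divide_distrib)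
    also have "\<dots> \<le> C1 * P + C2 * Y"
      using a1 a2 C1_nonneg C2_nonneg by (intro add_mono mult_left_mono) auto
    finally show "\<bar>stack_sq (d n)\<bar> / z ^ n \<le> C1 * P + C2 * Y" .
  qed
  show "let P = maxtr p Kn z;
           X = maxtr (\<lambda>\<nu>. perp_sq (x \<nu>)) Kn z;
           Y = maxtr (\<lambda>\<nu>. perp_sq (y \<nu>)) Kn z;
           DD = maxtr (\<lambda>\<nu>. stack_sq (d \<nu>)) Kn z;
           GP = \<eta> / (z - \<sigma>);
           \<omega>p = z / (z - \<sigma>) * p 0;
           GX = (1 + 1 / \<epsilon>x) / (z - \<rho>\<^sup>2 * (1 + \<epsilon>x));
           \<omega>x = z / (z - \<rho>\<^sup>2 * (1 + \<epsilon>x)) * perp_sq (x 0);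
           GY = (1 + 1 / \<epsilon>y) / (z - \<rho>\<^sup>2 * (1 + \<epsilon>y));
           \<omega>y = z / (z - \<rho>\<^sup>2 * (1 + \<epsilon>y)) * perp_sq (y 0)
       in P \<le> GP * (4 * Lmax\<^sup>2 * X + 2 * Y) + \<omega>p
        \<and> X \<le> GX * \<rho>\<^sup>2 * \<alpha>\<^sup>2 * DD + \<omega>x
        \<and> Y \<le> GY * (8 * Lmax\<^sup>2) * \<rho>\<^sup>2 * X + GY * (2 * Lmax\<^sup>2) * \<rho>\<^sup>2 * \<alpha>\<^sup>2 * DD + \<omega>y
        \<and> DD \<le> C1 * P + C2 * Y"
    unfolding Let_def P_def[symmetric] X_def[symmetric] Y_def[symmetric] DD_def[symmetric]
    using PP XX YY DDb unfolding lx_def ly_def by blast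
qed

end

theorem proposition3p8:
  fixes Kset Oset :: "(real^'d::finite) set"
    and f :: "'i::finite \<Rightarrow> real^'d \<Rightarrow> real"
    and gf :: "'i \<Rightarrow> real^'d \<Rightarrow> real^'d"
    and Hf :: "'i \<Rightarrow> real^'d \<Rightarrow> real^'d \<Rightarrow> real^'d"
    and G :: "real^'d \<Rightarrow> real"
    and \<mu> L :: real and Li :: "'i \<Rightarrow> real"
    and xstar :: "real^'d"
    and E :: "('i \<times> 'i) set" and W :: "'i \<Rightarrow> 'i \<Rightarrow> real"
    and ft :: "'i \<Rightarrow> real^'d \<Rightarrow> real^'d \<Rightarrow> real"
    and gft :: "'i \<Rightarrow> real^'d \<Rightarrow> real^'d \<Rightarrow> real^'d"
    and Hft :: "'i \<Rightarrow> real^'d \<Rightarrow> real^'d \<Rightarrow> real^'d \<Rightarrow> real^'d"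
    and Lt \<mu>t Dl Du :: "'i \<Rightarrow> real"
    and \<alpha> \<epsilon>opt \<epsilon>x \<epsilon>y :: real
    and x y xhat :: "nat \<Rightarrow> 'i \<Rightarrow> real^'d"
  assumes "m = real CARD('i)"
    and "F = (\<lambda>u. (1 / m) * (\<Sum>i\<in>UNIV. f i u))"
    and "HF = (\<lambda>u h. (1 / m) *\<^sub>R (\<Sum>i\<in>UNIV. Hf i u h))"
    and "U = (\<lambda>u. F u + G u)"
    and "Ustar = F xstar + G xstar"
    and "Lmax = Max (range Li)"
    and "D = (\<lambda>i. max \<bar>Dl i\<bar> \<bar>Du i\<bar>)"
    and "\<mu>tmin = Min (range \<mu>t)"
    and "Dlmin = Min (range Dl)"
    and "Dmax = Max (range D)"
    and "\<rho> = sonata_rho W TYPE('d)"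
    and "a = (1 - \<alpha> / 2) * \<mu>tmin + Dlmin / 2 * \<alpha> - \<epsilon>opt / 2"
    and "\<sigma> = 1 - \<alpha> * a / (Dmax\<^sup>2 / \<mu> + a)"
    and "\<eta> = (\<alpha> / (2 * \<epsilon>opt) * (Dmax\<^sup>2 / \<mu>) + \<alpha> / \<mu> * a) / (Dmax\<^sup>2 / \<mu> + a)"
    and "d = (\<lambda>\<nu> i. xhat \<nu> i - x \<nu> i)"
    and "p = (\<lambda>\<nu>. \<Sum>i\<in>UNIV. U (x \<nu> i) - Ustar)"
    and "C1 = 6 / \<mu> * ((Dmax / \<mu>tmin + 1)\<^sup>2 + 4 * Lmax\<^sup>2 / \<mu>tmin\<^sup>2)"
    and "C2 = 4 / \<mu>tmin\<^sup>2"
  \<comment> \<open>Assumption (A)\<close>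
    and K_nonempty: "Kset \<noteq> {}" and K_closed: "closed Kset" and K_convex: "convex Kset"
    and O_open: "open Oset" and K_sub_O: "Kset \<subseteq> Oset"
    and f_grad: "\<And>i u. u \<in> Oset \<Longrightarrow> (f i has_derivative (\<lambda>h. gf i u \<bullet> h)) (at u)"
    and f_hess: "\<And>i u. u \<in> Oset \<Longrightarrow> (gf i has_derivative Hf i u) (at u)"
    and f_convex: "\<And>i. convex_on Oset (f i)"
    and mu_pos: "\<mu> > 0"
    and F_hess_bounds: "\<And>u h. u \<in> Kset \<Longrightarrow>
        \<mu> * (norm h)\<^sup>2 \<le> h \<bullet> HF u h \<and> h \<bullet> HF u h \<le> L * (norm h)\<^sup>2"
    and G_convex: "convex_on Kset G"
    and xstar_in: "xstar \<in> Kset"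
    and xstar_min: "\<And>u. u \<in> Kset \<Longrightarrow> U xstar \<le> U u"
    and xstar_unique: "\<And>u. u \<in> Kset \<Longrightarrow> U u = U xstar \<Longrightarrow> u = xstar"
    and fi_hess_bound: "\<And>i u h. u \<in> Kset \<Longrightarrow> h \<bullet> Hf i u h \<le> Li i * (norm h)\<^sup>2"
  \<comment> \<open>Assumption (B)\<close>
    and E_sym: "\<And>i j. (i, j) \<in> E \<Longrightarrow> (j, i) \<in> E"
    and E_connected: "\<And>i j. (i, j) \<in> E\<^sup>*"
  \<comment> \<open>Assumption (W)\<close>
    and W_diag: "\<And>i. W i i > 0"
    and W_edge: "\<And>i j. i \<noteq> j \<Longrightarrow> (W i j > 0 \<longleftrightarrow> (i, j) \<in> E)"
    and W_nonedge: "\<And>i j. i \<noteq> j \<Longrightarrow> (i, j) \<notin> E \<Longrightarrow> W i j = 0"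
    and W_nonneg: "\<And>i j. W i j \<ge> 0"
    and W_rows: "\<And>i. (\<Sum>j\<in>UNIV. W i j) = 1"
    and W_cols: "\<And>j. (\<Sum>i\<in>UNIV. W i j) = 1"
  \<comment> \<open>Assumption (C)\<close>
    and ft_C2: "\<And>i. C2_on (Oset \<times> Oset) (\<lambda>(u, v). ft i u v)"
    and ft_grad: "\<And>i u v. u \<in> Oset \<Longrightarrow> v \<in> Oset \<Longrightarrow>
        ((\<lambda>w. ft i w v) has_derivative (\<lambda>h. gft i u v \<bullet> h)) (at u)"
    and ft_hess: "\<And>i u v. u \<in> Oset \<Longrightarrow> v \<in> Oset \<Longrightarrow>
        ((\<lambda>w. gft i w v) has_derivative Hft i u v) (at u)"
    and ft_consistent: "\<And>i u. u \<in> Oset \<Longrightarrow> gft i u u = gf i u"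
    and ft_lipschitz: "\<And>i u v w. v \<in> Kset \<Longrightarrow> u \<in> Kset \<Longrightarrow> w \<in> Kset \<Longrightarrow>
        norm (gft i u v - gft i w v) \<le> Lt i * norm (u - w)"
    and ft_strongly_convex: "\<And>i v. v \<in> Kset \<Longrightarrow> strongly_convex_on Kset (\<lambda>w. ft i w v) (\<mu>t i)"
    and mut_pos: "\<And>i. \<mu>t i > 0"
    and Dl_le_Du: "\<And>i. Dl i \<le> Du i"
    and ft_hess_bounds: "\<And>i u v h. u \<in> Kset \<Longrightarrow> v \<in> Kset \<Longrightarrow>
        Dl i * (norm h)\<^sup>2 \<le> h \<bullet> (Hft i u v h - HF u h) \<and> h \<bullet> (Hft i u v h - HF u h) \<le> Du i * (norm h)\<^sup>2"
  \<comment> \<open>SONATA iteration\<close>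
    and x0_in: "\<And>i. x 0 i \<in> Kset"
    and y0: "\<And>i. y 0 i = gf i (x 0 i)"
    and xhat_in: "\<And>\<nu> i. xhat \<nu> i \<in> Kset"
    and xhat_min: "\<And>\<nu> i u. u \<in> Kset \<Longrightarrow>
        ft i (xhat \<nu> i) (x \<nu> i) + (y \<nu> i - gf i (x \<nu> i)) \<bullet> (xhat \<nu> i - x \<nu> i) + G (xhat \<nu> i)
        \<le> ft i u (x \<nu> i) + (y \<nu> i - gf i (x \<nu> i)) \<bullet> (u - x \<nu> i) + G u"
    and x_update: "\<And>\<nu> i. x (Suc \<nu>) i = (\<Sum>j\<in>UNIV. W i j *\<^sub>R (x \<nu> j + \<alpha> *\<^sub>R d \<nu> j))"
    and y_update: "\<And>\<nu> i. y (Suc \<nu>) i =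
        (\<Sum>j\<in>UNIV. W i j *\<^sub>R (y \<nu> j + gf j (x (Suc \<nu>) j) - gf j (x \<nu> j)))"
  \<comment> \<open>Parameters\<close>
    and alpha_range: "0 < \<alpha>" "\<alpha> \<le> 1"
    and eps_opt_pos: "\<epsilon>opt > 0" and a_pos: "a > 0"
    and eps_x_pos: "\<epsilon>x > 0" and eps_y_pos: "\<epsilon>y > 0"
  shows "\<forall>Kn::nat. \<forall>z::real.
      max \<sigma> (max (\<rho>\<^sup>2 * (1 + \<epsilon>x)) (\<rho>\<^sup>2 * (1 + \<epsilon>y))) < z \<and> z < 1 \<longrightarrow>
      (let P = maxtr p Kn z;
           X = maxtr (\<lambda>\<nu>. perp_sq (x \<nu>)) Kn z;
           Y = maxtr (\<lambda>\<nu>. perp_sq (y \<nu>)) Kn z;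
           DD = maxtr (\<lambda>\<nu>. stack_sq (d \<nu>)) Kn z;
           GP = \<eta> / (z - \<sigma>);
           \<omega>p = z / (z - \<sigma>) * p 0;
           GX = (1 + 1 / \<epsilon>x) / (z - \<rho>\<^sup>2 * (1 + \<epsilon>x));
           \<omega>x = z / (z - \<rho>\<^sup>2 * (1 + \<epsilon>x)) * perp_sq (x 0);
           GY = (1 + 1 / \<epsilon>y) / (z - \<rho>\<^sup>2 * (1 + \<epsilon>y));
           \<omega>y = z / (z - \<rho>\<^sup>2 * (1 + \<epsilon>y)) * perp_sq (y 0)
       in P \<le> GP * (4 * Lmax\<^sup>2 * X + 2 * Y) + \<omega>p
        \<and> X \<le> GX * \<rho>\<^sup>2 * \<alpha>\<^sup>2 * DD + \<omega>x
        \<and> Y \<le> GY * (8 * Lmax\<^sup>2) * \<rho>\<^sup>2 * X + GY * (2 * Lmax\<^sup>2) * \<rho>\<^sup>2 * \<alpha>\<^sup>2 * DD + \<omega>y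
        \<and> DD \<le> C1 * P + C2 * Y)"
proof -
  interpret S: sonata Kset Oset f gf Hf G \<mu> L Li xstar E W ft gft Hft Lt \<mu>t Dl Du \<alpha> \<epsilon>opt \<epsilon>x \<epsilon>y x y xhat m F HF U Ustar Lmax D \<mu>tmin Dlmin Dmax \<rho> a \<sigma> \<eta> d p C1 C2
    by (rule sonata.intro) (fact assms)+
  show ?thesis by (rule S.main)
qed

end
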